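(* Let $0<s<\frac12$. Let $(\delta_n)_{n\in\mathbb N}$ be a sequence of positive numbers with $\delta_n\to0$; set $\Lambda_n:=1/\delta_n$, let $T_n=L_n(\Lambda_n+1)\delta_n$ with $L_n\in\mathbb N$, and let $u_n$ be a minimizer of $\mathcal F^{T_n}_s$ in $\mathscr A^{T_n,\Lambda_n,\delta_n}$. Then $$\lim_{n\to\infty}\mathcal F^{T_n}_s(u_n)=\frac12\int_0^1\int_{\mathbb R}\frac{|w(x)-w(y)|^2}{|x-y|^{1+2s}}\,dy\,dx,$$ where $w(x):=x-\lfloor x\rfloor$.
   Context: For $\Lambda,\delta>0$ and $T=L(\Lambda+1)\delta$ with $L\in\mathbb N$, the admissible class $\mathscr A^{T,\Lambda,\delta}$ is the set of continuous, $T$-periodic, piecewise affine functions $u:\mathbb R\to\mathbb R$ with $u'\in\{1,-\Lambda\}$ a.e., such that $(u')^{-1}(\{-\Lambda\})=\bigcup_{k\in\mathbb N}I^k$ for some intervals $I^k$ with $|I^k|=\delta$ for all $k$ and $\#(I^i\cap I^j)\le1$ for all $i\ne j$. For $0<s<1$, $$\mathcal F^T_s(u):=\frac1{2T}\int_0^T dx\int_{\mathbb R}\frac{|u(x)-u(y)|^2}{|x-y|^{1+2s}}\,dy.$$ *)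

theory Defs
  imports "HOL-Analysis.Analysis"
begin

definition piecewise_affine :: "(real \<Rightarrow> real) \<Rightarrow> bool" where
  "piecewise_affine u \<longleftrightarrow>
     (\<exists>S. (\<forall>a b. finite (S \<inter> {a..b})) \<and>
          (\<forall>x y. x \<le> y \<longrightarrow> {x..y} \<inter> S = {} \<longrightarrow>
              (\<exists>m c. \<forall>t\<in>{x..y}. u t = m * t + c)))"

definition admissible :: "real \<Rightarrow> real \<Rightarrow> real \<Rightarrow> (real \<Rightarrow> real) set" where
  "admissible T \<Lambda> \<delta> = {u.
     continuous_on UNIV u \<and>
     (\<forall>x. u (x + T) = u x) \<and>
     piecewise_affine u \<and>
     (\<exists>I :: nat \<Rightarrow> real set.
        (\<forall>k. is_interval (I k) \<and> emeasure lborel (I k) = ennreal \<delta>) \<and>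
        (\<forall>i j. i \<noteq> j \<longrightarrow> finite (I i \<inter> I j) \<and> card (I i \<inter> I j) \<le> 1) \<and>
        (AE x in lborel. (u has_real_derivative
            (if x \<in> (\<Union>k. I k) then - \<Lambda> else 1)) (at x)))}"

definition Fs :: "real \<Rightarrow> real \<Rightarrow> (real \<Rightarrow> real) \<Rightarrow> ennreal" where
  "Fs s T u = ennreal (1 / (2 * T)) *
     (\<integral>\<^sup>+ x. (\<integral>\<^sup>+ y. ennreal (\<bar>u x - u y\<bar>\<^sup>2 / \<bar>x - y\<bar> powr (1 + 2 * s)) \<partial>lborel)
        * indicator {0..T} x \<partial>lborel)"

end

theory Submission
  imports Defs
begin

lemma periodic_nat: fixes f :: "real \<Rightarrow> 'b"
  assumes "\<And>x. f (x + T) = f x" shows "f (x + real n * T) = f x"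
proof (induction n arbitrary: x)
  case 0 then show ?case by simp
next
  case (Suc n)
  have "f (x + real (Suc n) * T) = f ((x + real n * T) + T)" by (simp add: algebra_simps)
  also have "\<dots> = f x" using assms Suc by simp
  finally show ?case .
qed

lemma periodic_int: fixes f :: "real \<Rightarrow> 'b"
  assumes "\<And>x. f (x + T) = f x" shows "f (x + real_of_int k * T) = f x"
proof (cases "k \<ge> 0")
  case True
  then obtain n where "k = int n" by (metis nonneg_eq_int)
  then show ?thesis using periodic_nat[where f=f and T=T, OF assms] by simp
next
  case False
  then have "- k \<ge> 0" by simp
  then obtain n where "- k = int n" using nonneg_eq_int by blast
  then have k: "k = - int n" by simp
  have "f x = f ((x + real_of_int k * T) + real n * T)" by (simp add: k algebra_simps)
  also have "\<dots> = f (x + real_of_int k * T)" using periodic_nat[where f=f and T=T, OF assms] by simp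
  finally show ?thesis by simp
qed

lemma periodic_integral:
  fixes f :: "real \<Rightarrow> real"
  assumes cont: "continuous_on UNIV f" and per: "\<And>x. f (x + T) = f x" and T: "T > 0"
  shows "integral {a..a+T} f = integral {0..T} f"
proof -
  define k where "k = \<lfloor>a / T\<rfloor>"
  define a0 where "a0 = a - real_of_int k * T"
  have k1: "real_of_int k \<le> a / T" "a / T < real_of_int k + 1" unfolding k_def by (simp_all add: of_int_floor_le)
  have a0: "0 \<le> a0" "a0 < T"
  proof -
    have "real_of_int k * T \<le> a" using k1(1) T by (simp add: pos_le_divide_eq)
    moreover have "a < (real_of_int k + 1) * T" using k1(2) T by (simp add: pos_divide_less_eq)
    ultimately show "0 \<le> a0" "a0 < T" unfolding a0_def by (simp_all add: algebra_simps)
  qed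
  have int: "\<And>c d. f integrable_on {c..d}"
    by (rule integrable_continuous_real) (rule continuous_on_subset[OF cont], simp)
  have "integral {a..a+T} f = integral {a0..a0+T} (f \<circ> ((+) (real_of_int k * T)))"
    by (subst integral_shift_Icc_real) (simp add: a0_def)
  also have "f \<circ> ((+) (real_of_int k * T)) = f"
  proof (rule ext)
    fix x show "(f \<circ> ((+) (real_of_int k * T))) x = f x"
      using periodic_int[where f=f and T=T and x=x and k=k, OF per] by (metis add.commute comp_apply)
  qed
  also have "integral {a0..a0+T} f = integral {a0..T} f + integral {T..a0+T} f"
    using Henstock_Kurzweil_Integration.integral_combine[where a=a0 and c=T and b="a0+T" and f=f] a0 int by simp
  also have "integral {T..a0+T} f = integral {0..a0} (f \<circ> ((+) T))"
    by (subst integral_shift_Icc_real) simp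
  also have "f \<circ> ((+) T) = f"
  proof (rule ext)
    fix x show "(f \<circ> ((+) T)) x = f x" using per[of x] by (metis add.commute comp_apply)
  qed
  also have "integral {a0..T} f + integral {0..a0} f = integral {0..T} f"
    using a0 int Henstock_Kurzweil_Integration.integral_combine[where a=0 and c=a0 and b=T and f=f] by simp
  finally show ?thesis .
qed


lemma chord_upper:
  fixes z \<theta> :: real assumes "\<theta> - 1 \<le> z" "z \<le> \<theta>"
  shows "z\<^sup>2 \<le> \<theta>\<^sup>2 + (2*\<theta> - 1) * (z - \<theta>)"
proof -
  have "z\<^sup>2 - (\<theta>\<^sup>2 + (2*\<theta> - 1) * (z - \<theta>)) = (z - \<theta>) * (z - \<theta> + 1)"
    by (simp add: power2_eq_square algebra_simps)
  also have "\<dots> \<le> 0" using assms by (intro mult_nonpos_nonneg) auto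
  finally show ?thesis by simp
qed

lemma chord_lower:
  fixes z \<theta> :: real
  shows "z\<^sup>2 \<ge> \<theta>\<^sup>2 + (2*\<theta> - 1) * (z - \<theta>) - max 0 (- ((z - \<theta>) * (z - \<theta> + 1)))"
proof -
  have "z\<^sup>2 - (\<theta>\<^sup>2 + (2*\<theta> - 1) * (z - \<theta>)) = (z - \<theta>) * (z - \<theta> + 1)"
    by (simp add: power2_eq_square algebra_simps)
  then show ?thesis by linarith
qed

lemma err_int_zero:
  fixes j :: int shows "max 0 (- (real_of_int j * (real_of_int j + 1))) = 0"
proof -
  have "j * (j + 1) \<ge> 0"
    by (cases "j \<ge> 0") (auto intro: mult_nonneg_nonneg mult_nonpos_nonpos)
  then have "real_of_int j * (real_of_int j + 1) \<ge> 0"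
    by (metis of_int_0_le_iff of_int_1 of_int_add of_int_mult)
  then show ?thesis by simp
qed

lemma err_le_quarter:
  fixes t :: real shows "max 0 (- (t * (t + 1))) \<le> 1/4"
proof -
  have "- (t * (t + 1)) = 1/4 - (t + 1/2)\<^sup>2" by (simp add: power2_eq_square algebra_simps)
  then show ?thesis by (simp add: max_def)
qed

lemma int_affine:
  fixes z :: "real \<Rightarrow> real"
  assumes "z integrable_on {0..T}" "0 \<le> T"
  shows "integral {0..T} (\<lambda>x. c + k * z x) = T * c + k * integral {0..T} z"
proof -
  have "((\<lambda>x. c + k * z x) has_integral (T * c + k * integral {0..T} z)) {0..T}"
  proof (rule has_integral_add)
    show "((\<lambda>x. c) has_integral T * c) {0..T}"
      using has_integral_const_real[of c 0 T] assms(2) by simp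
    show "((\<lambda>x. k * z x) has_integral k * integral {0..T} z) {0..T}"
      using has_integral_mult_right[OF integrable_integral[OF assms(1)]] by simp
  qed
  then show ?thesis by (rule integral_unique)
qed

lemma avg_upper:
  fixes z :: "real \<Rightarrow> real"
  assumes cont: "continuous_on {0..T} z" and T: "0 \<le> T"
    and mean: "integral {0..T} z = 0"
    and bnd: "\<And>x. x \<in> {0..T} \<Longrightarrow> \<theta> - 1 \<le> z x \<and> z x \<le> \<theta>"
  shows "integral {0..T} (\<lambda>x. (z x)\<^sup>2) \<le> T * (\<theta> * (1 - \<theta>))"
proof -
  have i1: "(\<lambda>x. (z x)\<^sup>2) integrable_on {0..T}"
    by (intro integrable_continuous_real continuous_intros cont)
  have i2: "(\<lambda>x. \<theta>\<^sup>2 + (2*\<theta> - 1) * (z x - \<theta>)) integrable_on {0..T}"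
    by (intro integrable_continuous_real continuous_intros cont)
  have "integral {0..T} (\<lambda>x. (z x)\<^sup>2) \<le> integral {0..T} (\<lambda>x. \<theta>\<^sup>2 + (2*\<theta> - 1) * (z x - \<theta>))"
    using i1 i2 bnd chord_upper by (intro integral_le) auto
  also have "\<dots> = T * (\<theta> * (1 - \<theta>))"
  proof -
    have iz: "z integrable_on {0..T}" by (intro integrable_continuous_real cont)
    have "(\<lambda>x. \<theta>\<^sup>2 + (2*\<theta> - 1) * (z x - \<theta>)) = (\<lambda>x. (\<theta>\<^sup>2 - (2*\<theta> - 1) * \<theta>) + (2*\<theta> - 1) * z x)"
      by (auto simp: algebra_simps)
    then have "integral {0..T} (\<lambda>x. \<theta>\<^sup>2 + (2*\<theta> - 1) * (z x - \<theta>))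
       = integral {0..T} (\<lambda>x. (\<theta>\<^sup>2 - (2*\<theta> - 1) * \<theta>) + (2*\<theta> - 1) * z x)"
      by simp
    also have "\<dots> = T * (\<theta>\<^sup>2 - (2*\<theta> - 1) * \<theta>) + (2*\<theta> - 1) * integral {0..T} z"
      using int_affine[OF iz T] by simp
    also have "\<dots> = T * (\<theta> * (1 - \<theta>))" using mean by (simp add: power2_eq_square algebra_simps)
    finally show ?thesis .
  qed
  finally show ?thesis .
qed

lemma avg_lower:
  fixes z :: "real \<Rightarrow> real"
  assumes cont: "continuous_on {0..T} z" and T: "0 \<le> T"
    and mean: "integral {0..T} z = 0"
  shows "integral {0..T} (\<lambda>x. (z x)\<^sup>2) \<ge> T * (\<theta> * (1 - \<theta>))
      - integral {0..T} (\<lambda>x. max 0 (- ((z x - \<theta>) * (z x - \<theta> + 1))))"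
proof -
  have iz: "z integrable_on {0..T}" by (intro integrable_continuous_real cont)
  have i1: "(\<lambda>x. (z x)\<^sup>2) integrable_on {0..T}"
    by (intro integrable_continuous_real continuous_intros cont)
  have i3: "(\<lambda>x. max 0 (- ((z x - \<theta>) * (z x - \<theta> + 1)))) integrable_on {0..T}"
    by (intro integrable_continuous_real continuous_intros cont)
  have i2: "(\<lambda>x. \<theta>\<^sup>2 + (2*\<theta> - 1) * (z x - \<theta>) - max 0 (- ((z x - \<theta>) * (z x - \<theta> + 1)))) integrable_on {0..T}"
    by (intro integrable_continuous_real continuous_intros cont)
  have "integral {0..T} (\<lambda>x. \<theta>\<^sup>2 + (2*\<theta> - 1) * (z x - \<theta>) - max 0 (- ((z x - \<theta>) * (z x - \<theta> + 1))))
      \<le> integral {0..T} (\<lambda>x. (z x)\<^sup>2)"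
    using i1 i2 chord_lower by (intro integral_le) auto
  moreover have "integral {0..T} (\<lambda>x. \<theta>\<^sup>2 + (2*\<theta> - 1) * (z x - \<theta>) - max 0 (- ((z x - \<theta>) * (z x - \<theta> + 1))))
     = T * (\<theta> * (1 - \<theta>)) - integral {0..T} (\<lambda>x. max 0 (- ((z x - \<theta>) * (z x - \<theta> + 1))))"
  proof -
    have "(\<lambda>x. \<theta>\<^sup>2 + (2*\<theta> - 1) * (z x - \<theta>) - max 0 (- ((z x - \<theta>) * (z x - \<theta> + 1))))
       = (\<lambda>x. ((\<theta>\<^sup>2 - (2*\<theta> - 1) * \<theta>) + (2*\<theta> - 1) * z x) - max 0 (- ((z x - \<theta>) * (z x - \<theta> + 1))))"
      by (auto simp: algebra_simps)
    note fe = this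
    have "integral {0..T} (\<lambda>x. \<theta>\<^sup>2 + (2*\<theta> - 1) * (z x - \<theta>) - max 0 (- ((z x - \<theta>) * (z x - \<theta> + 1))))
       = integral {0..T} (\<lambda>x. (\<theta>\<^sup>2 - (2*\<theta> - 1) * \<theta>) + (2*\<theta> - 1) * z x)
         - integral {0..T} (\<lambda>x. max 0 (- ((z x - \<theta>) * (z x - \<theta> + 1))))"
    proof -
      have "(\<lambda>x. (\<theta>\<^sup>2 - (2*\<theta> - 1) * \<theta>) + (2*\<theta> - 1) * z x) integrable_on {0..T}"
        by (intro integrable_continuous_real continuous_intros cont)
      with i3 show ?thesis unfolding fe by (subst integral_diff[symmetric]) auto
    qed
    also have "\<dots> = T * (\<theta>\<^sup>2 - (2*\<theta> - 1) * \<theta>) + (2*\<theta> - 1) * integral {0..T} z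
         - integral {0..T} (\<lambda>x. max 0 (- ((z x - \<theta>) * (z x - \<theta> + 1))))"
      using int_affine[OF iz T] by simp
    also have "\<dots> = T * (\<theta> * (1 - \<theta>)) - integral {0..T} (\<lambda>x. max 0 (- ((z x - \<theta>) * (z x - \<theta> + 1))))"
      using mean by (simp add: power2_eq_square algebra_simps)
    finally show ?thesis .
  qed
  ultimately show ?thesis by linarith
qed


lemma transform:
  fixes f :: "real \<Rightarrow> real" and p T :: real
  assumes fm[measurable]: "f \<in> borel_measurable borel"
  shows "(\<integral>\<^sup>+ x. (\<integral>\<^sup>+ y. ennreal (\<bar>f x - f y\<bar>\<^sup>2 / \<bar>x - y\<bar> powr p) \<partial>lborel) * indicator {0..T} x \<partial>lborel)
    = (\<integral>\<^sup>+ h. ennreal (1 / \<bar>h\<bar> powr p) * (\<integral>\<^sup>+ x. ennreal ((f (x + h) - f x)\<^sup>2) * indicator {0..T} x \<partial>lborel) \<partial>lborel)"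
proof -
  have step1: "(\<integral>\<^sup>+ y. ennreal (\<bar>f x - f y\<bar>\<^sup>2 / \<bar>x - y\<bar> powr p) \<partial>lborel)
      = (\<integral>\<^sup>+ h. ennreal (1 / \<bar>h\<bar> powr p) * ennreal ((f (x + h) - f x)\<^sup>2) \<partial>lborel)" for x
  proof -
    have "(\<integral>\<^sup>+ y. ennreal (\<bar>f x - f y\<bar>\<^sup>2 / \<bar>x - y\<bar> powr p) \<partial>lborel)
        = (\<integral>\<^sup>+ h. ennreal (\<bar>f x - f (x + h)\<bar>\<^sup>2 / \<bar>x - (x + h)\<bar> powr p) \<partial>lborel)"
      using nn_integral_real_affine[of "\<lambda>y. ennreal (\<bar>f x - f y\<bar>\<^sup>2 / \<bar>x - y\<bar> powr p)" 1 x] by simp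
    also have "\<dots> = (\<integral>\<^sup>+ h. ennreal (1 / \<bar>h\<bar> powr p) * ennreal ((f (x + h) - f x)\<^sup>2) \<partial>lborel)"
    proof (intro arg_cong[where f="\<lambda>g. integral\<^sup>N lborel g"] ext)
      fix h
      have "\<bar>f x - f (x + h)\<bar>\<^sup>2 / \<bar>x - (x + h)\<bar> powr p = (1 / \<bar>h\<bar> powr p) * (f (x + h) - f x)\<^sup>2"
        by (simp add: power2_commute)
      note e = this
      show "ennreal (\<bar>f x - f (x + h)\<bar>\<^sup>2 / \<bar>x - (x + h)\<bar> powr p)
         = ennreal (1 / \<bar>h\<bar> powr p) * ennreal ((f (x + h) - f x)\<^sup>2)"
        by (subst e, rule ennreal_mult') simp
    qed
    finally show ?thesis by simp
  qed
  have "(\<integral>\<^sup>+ x. (\<integral>\<^sup>+ y. ennreal (\<bar>f x - f y\<bar>\<^sup>2 / \<bar>x - y\<bar> powr p) \<partial>lborel) * indicator {0..T} x \<partial>lborel)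
     = (\<integral>\<^sup>+ x. (\<integral>\<^sup>+ h. ennreal (1 / \<bar>h\<bar> powr p) * ennreal ((f (x + h) - f x)\<^sup>2) * indicator {0..T} x \<partial>lborel) \<partial>lborel)"
  proof (rule nn_integral_cong)
    fix x
    show "(\<integral>\<^sup>+ y. ennreal (\<bar>f x - f y\<bar>\<^sup>2 / \<bar>x - y\<bar> powr p) \<partial>lborel) * indicator {0..T} x
      = (\<integral>\<^sup>+ h. ennreal (1 / \<bar>h\<bar> powr p) * ennreal ((f (x + h) - f x)\<^sup>2) * indicator {0..T} x \<partial>lborel)"
      unfolding step1 by (rule nn_integral_multc[symmetric]) measurable
  qed
  also have "\<dots> = (\<integral>\<^sup>+ h. (\<integral>\<^sup>+ x. ennreal (1 / \<bar>h\<bar> powr p) * ennreal ((f (x + h) - f x)\<^sup>2) * indicator {0..T} x \<partial>lborel) \<partial>lborel)"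
    by (rule lborel_pair.Fubini'[symmetric]) measurable
  also have "\<dots> = (\<integral>\<^sup>+ h. ennreal (1 / \<bar>h\<bar> powr p) * (\<integral>\<^sup>+ x. ennreal ((f (x + h) - f x)\<^sup>2) * indicator {0..T} x \<partial>lborel) \<partial>lborel)"
    by (simp add: nn_integral_cmult[symmetric] mult.assoc)
  finally show ?thesis .
qed


lemma K_scale:
  fixes G :: "real \<Rightarrow> ennreal" and c p :: real
  assumes Gm[measurable]: "G \<in> borel_measurable borel" and c: "c > 0"
  shows "(\<integral>\<^sup>+ h. ennreal (1 / \<bar>h\<bar> powr p) * G (h / c) \<partial>lborel)
       = ennreal (c powr (1 - p)) * (\<integral>\<^sup>+ k. ennreal (1 / \<bar>k\<bar> powr p) * G k \<partial>lborel)"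
proof -
  have "(\<integral>\<^sup>+ h. ennreal (1 / \<bar>h\<bar> powr p) * G (h / c) \<partial>lborel)
      = ennreal \<bar>c\<bar> * (\<integral>\<^sup>+ k. ennreal (1 / \<bar>0 + c * k\<bar> powr p) * G ((0 + c * k) / c) \<partial>lborel)"
    using nn_integral_real_affine[of "\<lambda>h. ennreal (1 / \<bar>h\<bar> powr p) * G (h / c)" c 0] c
    by simp
  also have "\<dots> = ennreal c * (\<integral>\<^sup>+ k. ennreal (c powr (- p)) * (ennreal (1 / \<bar>k\<bar> powr p) * G k) \<partial>lborel)"
  proof -
    have "ennreal (1 / \<bar>0 + c * k\<bar> powr p) * G ((0 + c * k) / c)
        = ennreal (c powr (- p)) * (ennreal (1 / \<bar>k\<bar> powr p) * G k)" for k
    proof -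
      have e1: "1 / \<bar>0 + c * k\<bar> powr p = c powr (- p) * (1 / \<bar>k\<bar> powr p)"
        using c by (simp add: abs_mult powr_mult powr_minus divide_simps)
      have e2: "ennreal (1 / \<bar>0 + c * k\<bar> powr p) = ennreal (c powr (- p)) * ennreal (1 / \<bar>k\<bar> powr p)"
        by (subst e1, rule ennreal_mult') simp
      show ?thesis by (simp only: e2) (use c in \<open>simp add: mult.assoc\<close>)
    qed
    then show ?thesis using c by simp
  qed
  also have "\<dots> = ennreal c * ennreal (c powr (- p)) * (\<integral>\<^sup>+ k. ennreal (1 / \<bar>k\<bar> powr p) * G k \<partial>lborel)"
    by (subst nn_integral_cmult) (measurable, simp add: mult.assoc)
  also have "ennreal c * ennreal (c powr (- p)) = ennreal (c powr (1 - p))"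
    using c by (simp add: ennreal_mult'[symmetric] powr_diff powr_minus divide_simps)
  finally show ?thesis .
qed

lemma powr_integrals_finite:
  fixes s :: real assumes s: "0 < s" "s < 1/2"
  shows "(\<integral>\<^sup>+ k. ennreal (1 / \<bar>k\<bar> powr (1 + 2 * s)) * ennreal (min \<bar>k\<bar> 1) \<partial>lborel) < \<infinity>"
proof -
  define A where "A k = ennreal (k powr (- 2 * s)) * indicator {0..1} k + ennreal (k powr (- (1 + 2 * s))) * indicator {1..} k" for k :: real
  have Am[measurable]: "A \<in> borel_measurable borel" unfolding A_def by measurable
  have A1: "(\<integral>\<^sup>+ k. ennreal (k powr (- 2 * s)) * indicator {0..1} k \<partial>lborel) = ennreal (1 powr (- 2 * s + 1) / (- 2 * s + 1))"
    by (rule nn_integral_has_integral_lebesgue') (use has_integral_powr_from_0[of "-2 * s" 1] s in auto)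
  have A2: "(\<integral>\<^sup>+ k. ennreal (k powr (- (1 + 2 * s))) * indicator {1..} k \<partial>lborel)
      = ennreal (-(1 powr (- (1 + 2 * s) + 1)) / (- (1 + 2 * s) + 1))"
    by (rule nn_integral_has_integral_lebesgue') (use has_integral_powr_to_inf[of "- (1 + 2 * s)" 1] s in auto)
  have intA: "(\<integral>\<^sup>+ k. A k \<partial>lborel) < \<infinity>"
  proof -
    have "(\<integral>\<^sup>+ k. A k \<partial>lborel) = (\<integral>\<^sup>+ k. ennreal (k powr (- 2 * s)) * indicator {0..1} k \<partial>lborel)
       + (\<integral>\<^sup>+ k. ennreal (k powr (- (1 + 2 * s))) * indicator {1..} k \<partial>lborel)"
      unfolding A_def by (rule nn_integral_add) measurable
    then show ?thesis unfolding A1 A2 by simp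
  qed
  have intA': "(\<integral>\<^sup>+ k. A (- k) \<partial>lborel) = (\<integral>\<^sup>+ k. A k \<partial>lborel)"
    using nn_integral_real_affine[of A "-1" 0] by simp
  have pt: "ennreal (1 / \<bar>k\<bar> powr (1 + 2 * s)) * ennreal (min \<bar>k\<bar> 1) \<le> A k + A (- k)" for k
  proof -
    have key: "ennreal (1 / \<bar>k\<bar> powr (1 + 2 * s)) * ennreal (min \<bar>k\<bar> 1) \<le> A \<bar>k\<bar>"
    proof (cases "k = 0")
      case True then show ?thesis by simp
    next
      case False
      then have kp: "\<bar>k\<bar> > 0" by simp
      show ?thesis
      proof (cases "\<bar>k\<bar> \<le> 1")
        case True
        have "1 / \<bar>k\<bar> powr (1 + 2 * s) * \<bar>k\<bar> = \<bar>k\<bar> powr (- 2 * s)"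
          using kp by (simp add: powr_add powr_minus divide_simps)
        then show ?thesis using True kp unfolding A_def
          by (simp add: ennreal_mult'[symmetric] min_def)
      next
        case False
        have "1 / \<bar>k\<bar> powr (1 + 2 * s) = \<bar>k\<bar> powr (- (1 + 2 * s))"
          by (simp only: powr_minus_divide)
        then show ?thesis using False kp unfolding A_def
          by (simp add: min_def)
      qed
    qed
    also have "A \<bar>k\<bar> \<le> A k + A (- k)"
      by (cases "k \<ge> 0") (auto simp: add_increasing add_increasing2)
    finally show ?thesis .
  qed
  have "(\<integral>\<^sup>+ k. ennreal (1 / \<bar>k\<bar> powr (1 + 2 * s)) * ennreal (min \<bar>k\<bar> 1) \<partial>lborel)
     \<le> (\<integral>\<^sup>+ k. A k + A (- k) \<partial>lborel)"
    by (rule nn_integral_mono) (rule pt)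
  also have "\<dots> = (\<integral>\<^sup>+ k. A k \<partial>lborel) + (\<integral>\<^sup>+ k. A (- k) \<partial>lborel)"
    by (rule nn_integral_add) measurable
  also have "\<dots> < \<infinity>" using intA intA' by simp
  finally show ?thesis .
qed


lemma frac_shift1: assumes "0 \<le> x" "x + frac h < 1" shows "frac (x + h) = x + frac h"
proof -
  have "x + h - (x + frac h) = of_int \<lfloor>h\<rfloor>" by (simp add: frac_def)
  then show ?thesis using assms by (subst frac_unique_iff) (auto simp: Ints_of_int)
qed

lemma frac_shift2: assumes "1 \<le> x + frac h" "x < 1" shows "frac (x + h) = x + frac h - 1"
proof -
  have "x + h - (x + frac h - 1) = of_int (\<lfloor>h\<rfloor> + 1)" by (simp add: frac_def)
  then have z: "x + h - (x + frac h - 1) \<in> \<int>" by (metis Ints_of_int)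
  have "x + frac h - 1 < 1" using assms frac_lt_1[of h] by linarith
  then show ?thesis using z assms by (subst frac_unique_iff) auto
qed

lemma frac_G:
  fixes h :: real
  shows "(\<integral>\<^sup>+ x. ennreal ((frac (x + h) - frac x)\<^sup>2) * indicator {0..1} x \<partial>lborel)
       = ennreal (frac h * (1 - frac h))"
proof -
  define \<theta> where "\<theta> = frac h"
  have th: "0 \<le> \<theta>" "\<theta> < 1" unfolding \<theta>_def by (auto simp: frac_lt_1)
  have I1: "((\<lambda>x. (frac (x + h) - frac x)\<^sup>2) has_integral (1 - \<theta>) * \<theta>\<^sup>2) {0..1 - \<theta>}"
  proof (rule has_integral_spike_finite[where S="{1 - \<theta>}"])
    show "((\<lambda>x. \<theta>\<^sup>2) has_integral (1 - \<theta>) * \<theta>\<^sup>2) {0..1 - \<theta>}"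
      using has_integral_const_real[of "\<theta>\<^sup>2" 0 "1 - \<theta>"] th by simp
    fix x assume x: "x \<in> {0..1 - \<theta>} - {1 - \<theta>}"
    then have x1: "0 \<le> x" "x + \<theta> < 1" "x < 1" using th by auto
    then have "frac x = x" "frac (x + h) = x + \<theta>"
      using frac_shift1[of x h] unfolding \<theta>_def by (auto simp: frac_eq)
    then show "(frac (x + h) - frac x)\<^sup>2 = \<theta>\<^sup>2" by simp
  qed simp
  have I2: "((\<lambda>x. (frac (x + h) - frac x)\<^sup>2) has_integral \<theta> * (1 - \<theta>)\<^sup>2) {1 - \<theta>..1}"
  proof (rule has_integral_spike_finite[where S="{1}"])
    show "((\<lambda>x. (1 - \<theta>)\<^sup>2) has_integral \<theta> * (1 - \<theta>)\<^sup>2) {1 - \<theta>..1}"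
      using has_integral_const_real[of "(1 - \<theta>)\<^sup>2" "1 - \<theta>" 1] th by simp
    fix x assume x: "x \<in> {1 - \<theta>..1} - {1}"
    then have x1: "0 \<le> x" "1 \<le> x + \<theta>" "x < 1" using th by auto
    then have "frac x = x" "frac (x + h) = x + \<theta> - 1"
      using frac_shift2[of x h] unfolding \<theta>_def by (auto simp: frac_eq)
    then show "(frac (x + h) - frac x)\<^sup>2 = (1 - \<theta>)\<^sup>2" by (simp add: power2_commute)
  qed simp
  have "((\<lambda>x. (frac (x + h) - frac x)\<^sup>2) has_integral ((1 - \<theta>) * \<theta>\<^sup>2 + \<theta> * (1 - \<theta>)\<^sup>2)) {0..1}"
    using has_integral_combine[OF _ _ I1 I2] th by simp
  moreover have "(1 - \<theta>) * \<theta>\<^sup>2 + \<theta> * (1 - \<theta>)\<^sup>2 = \<theta> * (1 - \<theta>)"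
    by (simp add: power2_eq_square algebra_simps)
  ultimately have "((\<lambda>x. (frac (x + h) - frac x)\<^sup>2) has_integral \<theta> * (1 - \<theta>)) {0..1}" by simp
  then show ?thesis unfolding \<theta>_def
    by (rule nn_integral_has_integral_lebesgue'[rotated]) simp
qed

lemma g_le: fixes h :: real shows "frac h * (1 - frac h) \<le> min \<bar>h\<bar> 1" "0 \<le> frac h * (1 - frac h)"
proof -
  have f0: "0 \<le> frac h" "frac h < 1" by (auto simp: frac_lt_1)
  show "0 \<le> frac h * (1 - frac h)" using f0 by simp
  have a: "frac h * (1 - frac h) \<le> 1" using f0
    by (intro mult_le_one) auto
  have b: "frac h * (1 - frac h) \<le> \<bar>h\<bar>"
  proof (cases "\<bar>h\<bar> \<ge> 1")
    case True then show ?thesis using a by linarith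
  next
    case False
    show ?thesis
    proof (cases "h \<ge> 0")
      case True
      then have "frac h = h" using False by (simp add: frac_eq)
      moreover have "h * (1 - h) \<le> h * 1" using True by (intro mult_left_mono) auto
      ultimately show ?thesis using True by simp
    next
      case hn: False
      have "frac h = h + 1" using False hn by (subst frac_unique_iff) auto
      then have "frac h * (1 - frac h) = (h + 1) * (- h)" by simp
      also have "\<dots> \<le> - h" using False hn by (simp add: mult_le_cancel_right1)
      finally show ?thesis using hn by simp
    qed
  qed
  show "frac h * (1 - frac h) \<le> min \<bar>h\<bar> 1" using a b by simp
qed


lemma pa_deriv:
  assumes "piecewise_affine u"
  obtains S where "\<And>a b. finite (S \<inter> {a..b})" "\<And>t. t \<notin> S \<Longrightarrow> \<exists>m. (u has_real_derivative m) (at t)"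
proof -
  obtain S where fin: "\<And>a b. finite (S \<inter> {a..b})"
    and aff: "\<And>x y. x \<le> y \<Longrightarrow> {x..y} \<inter> S = {} \<Longrightarrow> \<exists>m c. \<forall>t\<in>{x..y}. u t = m * t + c"
    using assms unfolding piecewise_affine_def by blast
  have "\<exists>m. (u has_real_derivative m) (at t)" if t: "t \<notin> S" for t
  proof -
    define F where "F = S \<inter> {t - 1..t + 1}"
    have "finite F" unfolding F_def by (rule fin)
    then have "open (- F)" by (simp add: finite_imp_closed open_Compl)
    moreover have "t \<in> - F" using t unfolding F_def by auto
    ultimately obtain e where e: "e > 0" "ball t e \<subseteq> - F" by (meson open_contains_ball)
    define e' where "e' = min (e / 2) (1 / 2)"
    have e': "e' > 0" "e' < e" "e' < 1" using e unfolding e'_def by auto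
    have "{t - e'..t + e'} \<inter> S = {}"
    proof (rule ccontr)
      assume "{t - e'..t + e'} \<inter> S \<noteq> {}"
      then obtain y where y: "y \<in> S" "t - e' \<le> y" "y \<le> t + e'" by auto
      then have "y \<in> F" using e' unfolding F_def by auto
      moreover have "y \<in> ball t e" using y e' by (auto simp: dist_real_def)
      ultimately show False using e by auto
    qed
    then obtain m c where mc: "\<forall>r\<in>{t - e'..t + e'}. u r = m * r + c"
      using aff[of "t - e'" "t + e'"] e' by auto
    have "((\<lambda>r. m * r + c) has_real_derivative m) (at t)"
      by (auto intro!: derivative_eq_intros)
    then have "(u has_real_derivative m) (at t)"
    proof (rule has_field_derivative_transform_within_open[where S="{t - e'<..<t + e'}"])
      show "open {t - e'<..<t + e'}" by simp
      show "t \<in> {t - e'<..<t + e'}" using e' by simp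
      show "\<And>x. x \<in> {t - e'<..<t + e'} \<Longrightarrow> m * x + c = u x" using mc by auto
    qed
    then show ?thesis by blast
  qed
  then show ?thesis using that fin by blast
qed

lemma ae_negligible:
  assumes "AE x in lborel. P x"
  shows "negligible {x :: real. \<not> P x}"
proof -
  obtain N where N: "N \<in> null_sets lborel" "{x. \<not> P x} \<subseteq> N"
    using assms unfolding eventually_ae_filter by auto
  have "negligible N" using N(1) by (simp add: negligible_iff_null_sets null_sets_completionI)
  then show ?thesis using N(2) negligible_subset by blast
qed

lemma ftc_pa:
  fixes u \<phi> :: "real \<Rightarrow> real"
  assumes cont: "continuous_on UNIV u" and pa: "piecewise_affine u"
    and ae: "AE x in lborel. (u has_real_derivative \<phi> x) (at x)" and ab: "a \<le> b"
  shows "(\<phi> has_integral (u b - u a)) {a..b}"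
proof -
  obtain S where fin: "\<And>a b. finite (S \<inter> {a..b})"
    and der: "\<And>t. t \<notin> S \<Longrightarrow> \<exists>m. (u has_real_derivative m) (at t)"
    using pa_deriv[OF pa] by blast
  define u' where "u' t = (SOME m. (u has_real_derivative m) (at t))" for t
  have u': "(u has_real_derivative u' t) (at t)" if "t \<notin> S" for t
    unfolding u'_def using der[OF that] by (rule someI_ex)
  have "(u' has_integral (u b - u a)) {a..b}"
  proof (rule fundamental_theorem_of_calculus_interior_strong[OF fin[of a b] ab])
    fix x assume "x \<in> {a<..<b} - S \<inter> {a..b}"
    then have "x \<notin> S" by auto
    then show "(u has_vector_derivative u' x) (at x)"
      using u' by (simp add: has_real_derivative_iff_has_vector_derivative)
  next
    show "continuous_on {a..b} u" using cont by (rule continuous_on_subset) simp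
  qed
  moreover have "negligible ({x. \<not> (u has_real_derivative \<phi> x) (at x)} \<union> S \<inter> {a..b})"
    using ae_negligible[OF ae] fin[of a b] by (simp add: negligible_finite)
  moreover have "\<phi> x = u' x" if "x \<in> {a..b} - ({x. \<not> (u has_real_derivative \<phi> x) (at x)} \<union> S \<inter> {a..b})" for x
  proof -
    have "(u has_real_derivative \<phi> x) (at x)" "x \<notin> S" using that by auto
    then show "\<phi> x = u' x" using u' DERIV_unique by blast
  qed
  ultimately show ?thesis using has_integral_spike by blast
qed


lemma ind_integral:
  fixes A :: "real set"
  assumes A[measurable]: "A \<in> sets borel"
  shows "((indicator A :: real \<Rightarrow> real) has_integral measure lborel (A \<inter> {a..b})) {a..b}"
proof -
  have fin: "emeasure lborel (A \<inter> {a..b}) < \<infinity>"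
  proof -
    have "emeasure lborel (A \<inter> {a..b}) \<le> emeasure lborel {a..b}" by (rule emeasure_mono) auto
    also have "\<dots> < \<infinity>" by (simp add: emeasure_lborel_Icc_eq)
    finally show ?thesis .
  qed
  have "((\<lambda>x. 1::real) has_integral measure lborel (A \<inter> {a..b})) (A \<inter> {a..b})"
    by (rule has_integral_measure_lborel) (use fin in auto)
  then have "((\<lambda>x. if x \<in> A \<inter> {a..b} then 1::real else 0) has_integral measure lborel (A \<inter> {a..b})) {a..b}"
    by (subst has_integral_restrict) auto
  then show ?thesis by (rule has_integral_eq[rotated]) (auto simp: indicator_def)
qed

lemma interval_delta:
  fixes S :: "real set"
  assumes S: "is_interval S" and m: "emeasure lborel S = ennreal \<delta>" and d: "\<delta> > 0"
  shows "\<exists>a. {a<..<a+\<delta>} \<subseteq> S \<and> S \<subseteq> {a..a+\<delta>}"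
proof -
  have Sm: "S \<in> sets borel" by (rule real_interval_borel_measurable[OF S])
  have nosup: False if "{c..c + \<delta> + 1} \<subseteq> S" for c
  proof -
    have "ennreal (\<delta> + 1) = emeasure lborel {c..c + \<delta> + 1}" using d by simp
    also have "\<dots> \<le> emeasure lborel S" using that Sm by (intro emeasure_mono) auto
    finally show False using m d by simp
  qed
  obtain a b where cases: "S = {} \<or> S = UNIV \<or> S = {..<b} \<or> S = {..b} \<or> S = {a<..} \<or> S = {a..} \<or>
    S = {a<..<b} \<or> S = {a<..b} \<or> S = {a..<b} \<or> S = {a..b}"
    using is_real_interval[OF S] by blast
  have ab: "b - a = \<delta> \<and> a \<le> b" if "S = {a<..<b} \<or> S = {a<..b} \<or> S = {a..<b} \<or> S = {a..b}"
  proof -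
    have "a \<le> b"
    proof (rule ccontr)
      assume "\<not> a \<le> b" then have "S = {}" using that by auto
      then show False using m d by simp
    qed
    then have "emeasure lborel S = ennreal (b - a)" using that by auto
    then show ?thesis using m d \<open>a \<le> b\<close> by simp
  qed
  show ?thesis
  proof -
    consider "S = {}" | "S = UNIV" | "S = {..<b}" | "S = {..b}" | "S = {a<..}" | "S = {a..}"
      | "S = {a<..<b} \<or> S = {a<..b} \<or> S = {a..<b} \<or> S = {a..b}" using cases by blast
    then show ?thesis
    proof cases
      case 1 then show ?thesis using m d by simp
    next
      case 2 then show ?thesis using nosup[of 0] by auto
    next
      case 3
      have "{b - \<delta> - 2..b - \<delta> - 2 + \<delta> + 1} \<subseteq> S" using 3 by auto
      then show ?thesis using nosup by blast
    next
      case 4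
      have "{b - \<delta> - 2..b - \<delta> - 2 + \<delta> + 1} \<subseteq> S" using 4 by auto
      then show ?thesis using nosup by blast
    next
      case 5
      have "{a + 1..a + 1 + \<delta> + 1} \<subseteq> S" using 5 by auto
      then show ?thesis using nosup by blast
    next
      case 6
      have "{a + 1..a + 1 + \<delta> + 1} \<subseteq> S" using 6 by auto
      then show ?thesis using nosup by blast
    next
      case 7
      then have "b = a + \<delta>" using ab by auto
      then show ?thesis using 7 by (intro exI[of _ a]) auto
    qed
  qed
qed

locale adm =
  fixes u :: "real \<Rightarrow> real" and T \<Lambda> \<delta> :: real and I :: "nat \<Rightarrow> real set"
  assumes d: "\<delta> > 0" and Ld: "\<Lambda> = 1 / \<delta>" and T: "T > 0"
    and cont: "continuous_on UNIV u" and per: "\<And>x. u (x + T) = u x"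
    and pa: "piecewise_affine u"
    and Iint: "\<And>k. is_interval (I k)" and Imeas: "\<And>k. emeasure lborel (I k) = ennreal \<delta>"
    and Idisj: "\<And>i j. i \<noteq> j \<Longrightarrow> finite (I i \<inter> I j) \<and> card (I i \<inter> I j) \<le> 1"
    and ae: "AE x in lborel. (u has_real_derivative (if x \<in> (\<Union>k. I k) then - \<Lambda> else 1)) (at x)"
begin

definition "U = (\<Union>k. I k)"
definition "B = (\<Union>k. interior (I k))"

lemma I_borel[measurable]: "I k \<in> sets borel"
  by (rule real_interval_borel_measurable[OF Iint])

lemma U_borel[measurable]: "U \<in> sets borel"
  unfolding U_def by measurable

lemma B_open: "open B" unfolding B_def by auto

lemma B_borel[measurable]: "B \<in> sets borel" using B_open by simp

lemma B_sub_U: "B \<subseteq> U" unfolding B_def U_def using interior_subset by blast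

lemma ftc:
  assumes "a \<le> b"
  shows "u b - u a = (b - a) - (\<Lambda> + 1) * measure lborel (U \<inter> {a..b})"
proof -
  have "((\<lambda>x. if x \<in> U then - \<Lambda> else 1) has_integral (u b - u a)) {a..b}"
    unfolding U_def by (rule ftc_pa[OF cont pa ae assms])
  moreover have "((\<lambda>x. 1 - (\<Lambda> + 1) * indicator U x) has_integral ((b - a) - (\<Lambda> + 1) * measure lborel (U \<inter> {a..b}))) {a..b}"
  proof (rule has_integral_diff)
    show "((\<lambda>x. 1) has_integral b - a) {a..b}" using has_integral_const_real[of "1::real" a b] assms by simp
    show "((\<lambda>x. (\<Lambda> + 1) * indicator U x) has_integral (\<Lambda> + 1) * measure lborel (U \<inter> {a..b})) {a..b}"
      by (rule has_integral_mult_right) (rule ind_integral, simp)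
  qed
  moreover have "(\<lambda>x. if x \<in> U then - \<Lambda> else 1) = (\<lambda>x. 1 - (\<Lambda> + 1) * indicator U x)"
    by (auto simp: indicator_def)
  ultimately show ?thesis using has_integral_unique by metis
qed

lemma period_measure: "measure lborel (U \<inter> {a..a+T}) = T / (\<Lambda> + 1)"
proof -
  have "u (a + T) - u a = T - (\<Lambda> + 1) * measure lborel (U \<inter> {a..a+T})"
    using ftc[of a "a + T"] T by simp
  moreover have "u (a + T) = u a" by (rule per)
  moreover have "\<Lambda> + 1 > 0" using d Ld by (simp add: add_pos_pos)
  ultimately show ?thesis by (simp add: field_simps)
qed

end


context adm begin

lemma integer_measure:
  assumes ab: "a \<le> b" and aB: "a \<notin> B" and bB: "b \<notin> B"
  shows "\<exists>n::nat. measure lborel (U \<inter> {a..b}) = real n * \<delta>"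
proof -
  have "\<forall>k. \<exists>l. {l<..<l+\<delta>} \<subseteq> I k \<and> I k \<subseteq> {l..l+\<delta>}"
    using interval_delta[OF Iint Imeas d] by blast
  then obtain lo where lo: "\<And>k. {lo k<..<lo k+\<delta>} \<subseteq> I k" "\<And>k. I k \<subseteq> {lo k..lo k+\<delta>}"
    by metis
  have intB: "{lo k<..<lo k+\<delta>} \<subseteq> B" for k
  proof -
    have "{lo k<..<lo k+\<delta>} \<subseteq> interior (I k)" by (rule interior_maximal[OF lo(1)]) simp
    then show ?thesis unfolding B_def by blast
  qed
  define J where "J k = I k \<inter> {a..b}" for k
  have Jm[measurable]: "J k \<in> sets borel" for k unfolding J_def by measurable
  have Jcases: "J k = I k \<or> emeasure lborel (J k) = 0" for k
  proof (cases "lo k + \<delta> \<le> a")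
    case True
    then have "J k \<subseteq> {a}" using lo(2)[of k] unfolding J_def by fastforce
    then have "emeasure lborel (J k) \<le> emeasure lborel {a}" by (intro emeasure_mono) auto
    then show ?thesis by simp
  next
    case c1: False
    show ?thesis
    proof (cases "b \<le> lo k")
      case True
      then have "J k \<subseteq> {b}" using lo(2)[of k] unfolding J_def by fastforce
      then have "emeasure lborel (J k) \<le> emeasure lborel {b}" by (intro emeasure_mono) auto
      then show ?thesis by simp
    next
      case False
      have "\<not> lo k < a"
      proof
        assume "lo k < a" then have "a \<in> {lo k<..<lo k+\<delta>}" using c1 by auto
        then show False using aB intB[of k] by blast
      qed
      moreover have "\<not> b < lo k + \<delta>"
      proof
        assume "b < lo k + \<delta>" then have "b \<in> {lo k<..<lo k+\<delta>}" using False by auto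
        then show False using bB intB[of k] by blast
      qed
      ultimately have "I k \<subseteq> {a..b}" using lo(2)[of k] by auto
      then show ?thesis unfolding J_def by auto
    qed
  qed
  define f where "f k = emeasure lborel (J k)" for k
  have f_eq: "f k = (if J k = I k then ennreal \<delta> else 0)" for k
    using Jcases[of k] Imeas[of k] unfolding f_def by auto
  define D where "D = (\<Union>i. \<Union>j\<in>{j. j \<noteq> i}. I i \<inter> I j)"
  have "countable D" unfolding D_def
  proof (rule countable_UN)
    fix i :: nat
    show "countable (\<Union>j\<in>{j. j \<noteq> i}. I i \<inter> I j)"
    proof (rule countable_UN)
      fix j assume "j \<in> {j. j \<noteq> i}"
      then have "finite (I i \<inter> I j)" using Idisj[of i j] by auto
      then show "countable (I i \<inter> I j)" by (rule countable_finite)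
    qed simp
  qed simp
  then have Dnull: "D \<in> null_sets lborel" by (rule countable_imp_null_set_lborel)
  define J' where "J' k = J k - D" for k
  have dj: "disjoint_family J'"
    unfolding disjoint_family_on_def J'_def J_def D_def by blast
  have "(\<Sum>k. emeasure lborel (J' k)) = emeasure lborel (\<Union>k. J' k)"
  proof (rule suminf_emeasure)
    show "range J' \<subseteq> sets lborel" using Dnull unfolding J'_def by auto
    show "disjoint_family J'" by (rule dj)
  qed
  moreover have "emeasure lborel (J' k) = f k" for k
    unfolding J'_def f_def using Dnull by (intro emeasure_Diff_null_set) auto
  moreover have "(\<Union>k. J' k) = (U \<inter> {a..b}) - D" unfolding J'_def J_def U_def by blast
  moreover have "emeasure lborel ((U \<inter> {a..b}) - D) = emeasure lborel (U \<inter> {a..b})"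
    using Dnull by (intro emeasure_Diff_null_set) auto
  ultimately have sumf: "(\<Sum>k. f k) = emeasure lborel (U \<inter> {a..b})" by simp
  have bound: "emeasure lborel (U \<inter> {a..b}) \<le> ennreal (b - a)"
  proof -
    have "emeasure lborel (U \<inter> {a..b}) \<le> emeasure lborel {a..b}" by (intro emeasure_mono) auto
    then show ?thesis using ab by simp
  qed
  define K where "K = {k. J k = I k}"
  have finK: "finite K"
  proof (rule ccontr)
    assume inf: "infinite K"
    define n where "n = nat \<lceil>(b - a) / \<delta>\<rceil> + 1"
    obtain F where F: "finite F" "card F = n" "F \<subseteq> K" using infinite_arbitrarily_large[OF inf] by blast
    have "sum f F = (\<Sum>k\<in>F. ennreal \<delta>)" using F(3) unfolding K_def by (intro sum.cong) (auto simp: f_eq)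
    also have "\<dots> = ennreal (real n * \<delta>)" using F(2) d by (simp add: ennreal_of_nat_eq_real_of_nat ennreal_mult')
    finally have "ennreal (real n * \<delta>) = sum f F" ..
    also have "\<dots> \<le> (\<Sum>k. f k)" by (rule sum_le_suminf) (auto simp: F(1))
    also have "\<dots> \<le> ennreal (b - a)" using sumf bound by simp
    finally have le: "real n * \<delta> \<le> b - a" using ab by (simp add: ennreal_le_iff)
    have "(b - a) / \<delta> < real n" unfolding n_def by linarith
    then have "b - a < real n * \<delta>" using d by (simp add: divide_less_eq)
    then show False using le by simp
  qed
  have "(\<Sum>k. f k) = (\<Sum>k\<in>K. f k)" by (rule suminf_finite[OF finK]) (auto simp: f_eq K_def)
  also have "\<dots> = (\<Sum>k\<in>K. ennreal \<delta>)" by (intro sum.cong) (auto simp: f_eq K_def)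
  also have "\<dots> = ennreal (real (card K) * \<delta>)" using d by (simp add: ennreal_of_nat_eq_real_of_nat ennreal_mult')
  finally have "emeasure lborel (U \<inter> {a..b}) = ennreal (real (card K) * \<delta>)" using sumf by simp
  then have "measure lborel (U \<inter> {a..b}) = real (card K) * \<delta>"
    using d by (simp add: measure_def)
  then show ?thesis by blast
qed

end


context adm begin

lemma c_eq: "(\<Lambda> + 1) * \<delta> = 1 + \<delta>" using d Ld by (simp add: field_simps)

lemma c_pos: "\<Lambda> + 1 > 0" using d Ld by (simp add: add_pos_pos)

lemma cont_shift: "continuous_on S (\<lambda>x. u (x + h))"
  by (rule continuous_on_compose2[OF cont]) (auto intro: continuous_intros)

lemma mean_zero: "integral {0..T} (\<lambda>x. u (x + h) - u x) = 0"
proof -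
  have i1: "(\<lambda>x. u (x + h)) integrable_on {0..T}"
    by (rule integrable_continuous_real) (rule cont_shift)
  have i2: "u integrable_on {0..T}"
    by (rule integrable_continuous_real) (rule continuous_on_subset[OF cont], simp)
  have "integral {0..T} (\<lambda>x. u (x + h)) = integral {0..T} (u \<circ> ((+) h))"
    by (simp add: o_def add.commute)
  also have "\<dots> = integral {0 + h..T + h} u" by (rule integral_shift_Icc_real)
  also have "\<dots> = integral {h..h + T} u" by (simp add: add.commute)
  also have "\<dots> = integral {0..T} u" by (rule periodic_integral[OF cont per T])
  finally show ?thesis using i1 i2 by (simp add: integral_diff)
qed

lemma meas_fin: "U \<inter> {a..b} \<in> fmeasurable lborel"
proof (rule fmeasurableI2)
  show "{a..b} \<in> fmeasurable lborel" by (rule fmeasurableI) (auto simp: emeasure_lborel_Icc_eq)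
qed auto

lemma B_period_measure: "measure lborel (B \<inter> {a..a+T}) \<le> T / (\<Lambda> + 1)"
proof -
  have "measure lborel (B \<inter> {a..a+T}) \<le> measure lborel (U \<inter> {a..a+T})"
    by (rule measure_mono_fmeasurable) (use B_sub_U meas_fin in auto)
  then show ?thesis using period_measure by simp
qed

lemma z_int:
  assumes x: "x \<notin> B" "x + h \<notin> B"
  shows "\<exists>j::int. (u (x + h) - u x) / (1 + \<delta>) - frac (h / (1 + \<delta>)) = real_of_int j"
proof (cases "h \<ge> 0")
  case True
  obtain n :: nat where n: "measure lborel (U \<inter> {x..x+h}) = real n * \<delta>"
    using integer_measure[of x "x + h"] True x by auto
  have "u (x + h) - u x = h - (\<Lambda> + 1) * (real n * \<delta>)" using ftc[of x "x + h"] True n by simp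
  also have "\<dots> = h - real n * (1 + \<delta>)" using c_eq by (simp add: algebra_simps)
  finally have "(u (x + h) - u x) / (1 + \<delta>) = h / (1 + \<delta>) - real n"
    using d by (simp add: field_simps)
  then have "(u (x + h) - u x) / (1 + \<delta>) - frac (h / (1 + \<delta>)) = real_of_int (\<lfloor>h / (1 + \<delta>)\<rfloor> - int n)"
    by (simp add: frac_def)
  then show ?thesis by blast
next
  case False
  obtain n :: nat where n: "measure lborel (U \<inter> {x+h..x}) = real n * \<delta>"
    using integer_measure[of "x + h" x] False x by auto
  have "u x - u (x + h) = - h - (\<Lambda> + 1) * (real n * \<delta>)" using ftc[of "x + h" x] False n by simp
  also have "\<dots> = - h - real n * (1 + \<delta>)" using c_eq by (simp add: algebra_simps)
  finally have "(u (x + h) - u x) / (1 + \<delta>) = h / (1 + \<delta>) + real n"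
    using d by (simp add: field_simps)
  then have "(u (x + h) - u x) / (1 + \<delta>) - frac (h / (1 + \<delta>)) = real_of_int (\<lfloor>h / (1 + \<delta>)\<rfloor> + int n)"
    by (simp add: frac_def)
  then show ?thesis by blast
qed

end


context adm begin

lemma err_integral:
  fixes h :: real
  defines "z \<equiv> \<lambda>x. (u (x + h) - u x) / (1 + \<delta>)"
  defines "\<theta> \<equiv> frac (h / (1 + \<delta>))"
  shows "integral {0..T} (\<lambda>x. max 0 (- ((z x - \<theta>) * (z x - \<theta> + 1)))) \<le> T * \<delta> / (2 * (1 + \<delta>))"
proof -
  define e where "e x = max 0 (- ((z x - \<theta>) * (z x - \<theta> + 1)))" for x
  have pt: "e x \<le> (1/4) * (indicator B x + indicator B (h + x))" for x
  proof (cases "x \<in> B \<or> x + h \<in> B")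
    case True
    then have "indicator B x + indicator B (h + x) \<ge> (1::real)"
      by (auto simp: indicator_def add.commute)
    then have "(1/4) * (indicator B x + indicator B (h + x)) \<ge> (1/4::real)" by simp
    moreover have "e x \<le> 1/4" unfolding e_def by (rule err_le_quarter)
    ultimately show ?thesis by (rule order_trans[rotated])
  next
    case False
    then obtain j :: int where "z x - \<theta> = real_of_int j"
      using z_int[of x h] unfolding z_def \<theta>_def by auto
    then have "e x = 0" unfolding e_def using err_int_zero[of j] by simp
    then show ?thesis by (simp add: indicator_def)
  qed
  have zc: "continuous_on {0..T} z" unfolding z_def
    by (intro continuous_intros cont_shift continuous_on_subset[OF cont]) (use d in auto)
  have ie: "e integrable_on {0..T}" unfolding e_def
    by (intro integrable_continuous_real continuous_intros zc)
  have h1: "((indicator B :: real \<Rightarrow> real) has_integral measure lborel (B \<inter> {0..0+T})) {0..T}"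
    using ind_integral[OF B_borel, of 0 T] by simp
  have h2: "((\<lambda>x. indicator B (h + x) :: real) has_integral measure lborel (B \<inter> {h..h+T})) {0..T}"
  proof -
    have "((indicator B :: real \<Rightarrow> real) has_integral measure lborel (B \<inter> {h..h+T})) {0 + h..T + h}"
      using ind_integral[OF B_borel, of h "h + T"] by (simp add: add.commute)
    then have "((indicator B \<circ> (+) h :: real \<Rightarrow> real) has_integral measure lborel (B \<inter> {h..h+T})) {0..T}"
      by (subst has_integral_shift_Icc_real)
    then show ?thesis by (simp add: o_def)
  qed
  have hsum: "((\<lambda>x. (1/4) * (indicator B x + indicator B (h + x)) :: real) has_integral
      (1/4) * (measure lborel (B \<inter> {0..0+T}) + measure lborel (B \<inter> {h..h+T}))) {0..T}"
    by (intro has_integral_mult_right has_integral_add h1 h2)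
  have "integral {0..T} e \<le> (1/4) * (measure lborel (B \<inter> {0..0+T}) + measure lborel (B \<inter> {h..h+T}))"
    by (rule has_integral_le[OF integrable_integral[OF ie] hsum]) (use pt in auto)
  also have "\<dots> \<le> (1/4) * (T / (\<Lambda> + 1) + T / (\<Lambda> + 1))"
    using B_period_measure[of 0] B_period_measure[of h] by (intro mult_left_mono add_mono) auto
  also have "\<dots> = T * \<delta> / (2 * (1 + \<delta>))"
  proof -
    have "T / (\<Lambda> + 1) = T * \<delta> / (1 + \<delta>)" unfolding Ld using d by (simp add: field_simps)
    then show ?thesis by simp
  qed
  finally show ?thesis unfolding e_def .
qed

lemma lower_h:
  fixes h :: real
  shows "(\<integral>\<^sup>+ x. ennreal ((u (x + h) - u x)\<^sup>2) * indicator {0..T} x \<partial>lborel)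
      + ennreal (T * (1 + \<delta>)\<^sup>2 * min \<bar>h\<bar> \<delta>)
    \<ge> ennreal (T * (1 + \<delta>)\<^sup>2 * (frac (h / (1 + \<delta>)) * (1 - frac (h / (1 + \<delta>)))))"
proof -
  define P where "P = 1 + \<delta>"
  have P: "P \<ge> 1" using d unfolding P_def by simp
  define z where "z x = (u (x + h) - u x) / P" for x
  define \<theta> where "\<theta> = frac (h / P)"
  define g where "g = \<theta> * (1 - \<theta>)"
  have zc: "continuous_on {0..T} z" unfolding z_def
    by (intro continuous_intros cont_shift continuous_on_subset[OF cont]) (use P in auto)
  have iz: "(\<lambda>x. u (x + h) - u x) integrable_on {0..T}"
    by (intro integrable_continuous_real continuous_intros cont_shift continuous_on_subset[OF cont]) auto
  have zmean: "integral {0..T} z = 0"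
    unfolding z_def using mean_zero[of h] by (simp add: integral_divide)
  have low: "integral {0..T} (\<lambda>x. (z x)\<^sup>2) \<ge> T * g - integral {0..T} (\<lambda>x. max 0 (- ((z x - \<theta>) * (z x - \<theta> + 1))))"
    unfolding g_def using avg_lower[OF zc _ zmean, of \<theta>] T by simp
  have err: "integral {0..T} (\<lambda>x. max 0 (- ((z x - \<theta>) * (z x - \<theta> + 1)))) \<le> T * \<delta> / (2 * P)"
    using err_integral[of h] unfolding z_def \<theta>_def P_def by simp
  define G where "G = integral {0..T} (\<lambda>x. (u (x + h) - u x)\<^sup>2)"
  have iG: "(\<lambda>x. (u (x + h) - u x)\<^sup>2) integrable_on {0..T}"
    by (intro integrable_continuous_real continuous_intros cont_shift continuous_on_subset[OF cont]) auto
  have G0: "G \<ge> 0" unfolding G_def by (rule integral_nonneg[OF iG]) simp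
  have "(\<lambda>x. (u (x + h) - u x)\<^sup>2) = (\<lambda>x. P\<^sup>2 * (z x)\<^sup>2)"
    using P by (auto simp: z_def power_divide)
  then have GP: "G = P\<^sup>2 * integral {0..T} (\<lambda>x. (z x)\<^sup>2)" unfolding G_def by simp
  have "G \<ge> P\<^sup>2 * (T * g - T * \<delta> / (2 * P))"
    unfolding GP using low err P by (intro mult_left_mono) auto
  moreover have "P\<^sup>2 * (T * g - T * \<delta> / (2 * P)) \<ge> T * P\<^sup>2 * (g - \<delta>)"
  proof -
    have "P\<^sup>2 * (T * \<delta> / (2 * P)) = T * P * \<delta> / 2" using P by (simp add: power2_eq_square field_simps)
    moreover have "T * P * \<delta> / 2 \<le> T * P\<^sup>2 * \<delta>"
    proof -
      have "T * P * \<delta> * 1 \<le> T * P * \<delta> * P" by (rule mult_left_mono) (use P T d in auto)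
      then show ?thesis using T d P by (simp add: power2_eq_square algebra_simps)
    qed
    ultimately show ?thesis by (simp add: algebra_simps)
  qed
  ultimately have Gg: "G + T * P\<^sup>2 * \<delta> \<ge> T * P\<^sup>2 * g" by (simp add: algebra_simps)
  have gh: "g \<le> \<bar>h\<bar>" "g \<ge> 0"
  proof -
    have "g \<le> min \<bar>h / P\<bar> 1" "g \<ge> 0" unfolding g_def \<theta>_def using g_le[of "h / P"] by auto
    moreover have "\<bar>h / P\<bar> \<le> \<bar>h\<bar>"
    proof -
      have "\<bar>h\<bar> * 1 \<le> \<bar>h\<bar> * P" by (rule mult_left_mono) (use P in auto)
      then show ?thesis using P by (simp add: abs_divide divide_le_eq)
    qed
    ultimately show "g \<le> \<bar>h\<bar>" "g \<ge> 0" by auto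
  qed
  have nn: "(\<integral>\<^sup>+ x. ennreal ((u (x + h) - u x)\<^sup>2) * indicator {0..T} x \<partial>lborel) = ennreal G"
    unfolding G_def by (rule nn_integral_has_integral_lebesgue') (auto intro: integrable_integral[OF iG])
  have "T * P\<^sup>2 * g \<le> G + T * P\<^sup>2 * min \<bar>h\<bar> \<delta>"
  proof (cases "\<bar>h\<bar> \<le> \<delta>")
    case True
    have "T * P\<^sup>2 * g \<le> T * P\<^sup>2 * \<bar>h\<bar>" using gh T by (intro mult_left_mono) auto
    then show ?thesis using True G0 by (simp add: min_def)
  next
    case False
    then show ?thesis using Gg by (simp add: min_def)
  qed
  then have "ennreal (T * P\<^sup>2 * g) \<le> ennreal (G + T * P\<^sup>2 * min \<bar>h\<bar> \<delta>)" by (rule ennreal_leI)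
  also have "\<dots> = ennreal G + ennreal (T * P\<^sup>2 * min \<bar>h\<bar> \<delta>)"
    using G0 T d by (intro ennreal_plus) auto
  finally show ?thesis unfolding nn P_def g_def \<theta>_def by simp
qed

end


definition vcell :: "real \<Rightarrow> real \<Rightarrow> real" where
  "vcell \<delta> t = min t ((1 + \<delta> - t) / \<delta>)"
definition veq :: "real \<Rightarrow> real \<Rightarrow> real" where
  "veq \<delta> x = vcell \<delta> (x - (1 + \<delta>) * of_int \<lfloor>x / (1 + \<delta>)\<rfloor>)"

context fixes \<delta> :: real assumes d: "\<delta> > 0" begin

lemma floor_cell:
  assumes "of_int k * (1 + \<delta>) \<le> x" "x < of_int k * (1 + \<delta>) + (1 + \<delta>)"
  shows "\<lfloor>x / (1 + \<delta>)\<rfloor> = k"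
proof -
  have P: "1 + \<delta> > 0" using d by simp
  have "of_int k \<le> x / (1 + \<delta>)" using assms P by (simp add: le_divide_eq)
  moreover have "x / (1 + \<delta>) < of_int k + 1" using assms P by (simp add: divide_less_eq algebra_simps)
  ultimately show ?thesis by (simp add: floor_eq_iff)
qed

lemma vcell0: "vcell \<delta> 0 = 0" using d unfolding vcell_def by (simp add: min_def)
lemma vcellP: "vcell \<delta> (1 + \<delta>) = 0" using d unfolding vcell_def by (simp add: min_def)
lemma vcell_low: assumes "0 \<le> t" "t \<le> 1" shows "vcell \<delta> t = t"
proof -
  have "t * \<delta> \<le> 1 * \<delta>" using assms d by (intro mult_right_mono) auto
  then have "t * \<delta> \<le> 1 + \<delta> - t" using assms by linarith
  then have "t \<le> (1 + \<delta> - t) / \<delta>" using d by (simp add: le_divide_eq)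
  then show ?thesis unfolding vcell_def by (simp add: min_absorb1)
qed
lemma vcell_high: assumes "1 \<le> t" "t \<le> 1 + \<delta>" shows "vcell \<delta> t = (1 + \<delta> - t) / \<delta>"
proof -
  have "1 * \<delta> \<le> t * \<delta>" using assms d by (intro mult_right_mono) auto
  then have "1 + \<delta> - t \<le> t * \<delta>" using assms by linarith
  then have "(1 + \<delta> - t) / \<delta> \<le> t" using d by (simp add: divide_le_eq)
  then show ?thesis unfolding vcell_def by (simp add: min_absorb2)
qed

lemma cellrep:
  assumes "of_int k * (1 + \<delta>) \<le> x" "x \<le> of_int k * (1 + \<delta>) + (1 + \<delta>)"
  shows "veq \<delta> x = vcell \<delta> (x - of_int k * (1 + \<delta>))"
proof (cases "x < of_int k * (1 + \<delta>) + (1 + \<delta>)")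
  case True
  then show ?thesis unfolding veq_def using floor_cell[OF assms(1) True] by (simp add: mult.commute)
next
  case False
  then have x: "x = of_int (k + 1) * (1 + \<delta>)" using assms by (simp add: algebra_simps)
  have "\<lfloor>x / (1 + \<delta>)\<rfloor> = k + 1" using d x by simp
  then have "veq \<delta> x = vcell \<delta> 0" unfolding veq_def using x by (simp add: mult.commute)
  also have "\<dots> = vcell \<delta> (x - of_int k * (1 + \<delta>))" using x vcell0 vcellP by (simp add: algebra_simps)
  finally show ?thesis .
qed

lemma veq_lattice: "veq \<delta> (of_int k * (1 + \<delta>)) = 0"
  using cellrep[of k "of_int k * (1 + \<delta>)"] d vcell0 by simp

lemma vcell_mono:
  assumes "0 \<le> t1" "t1 \<le> t2" "t2 \<le> 1 + \<delta>"
  shows "vcell \<delta> t2 - vcell \<delta> t1 \<le> t2 - t1" "vcell \<delta> t1 - vcell \<delta> t2 \<le> (t2 - t1) / \<delta>"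
proof -
  have a: "(1 + \<delta> - t2) / \<delta> \<le> (1 + \<delta> - t1) / \<delta>" using assms d by (simp add: divide_right_mono)
  show "vcell \<delta> t2 - vcell \<delta> t1 \<le> t2 - t1"
    unfolding vcell_def using a assms by (auto simp: min_def)
  have b: "(1 + \<delta> - t1) / \<delta> - (1 + \<delta> - t2) / \<delta> = (t2 - t1) / \<delta>" using d by (simp add: field_simps)
  have c: "0 \<le> (t2 - t1) / \<delta>" using assms d by simp
  show "vcell \<delta> t1 - vcell \<delta> t2 \<le> (t2 - t1) / \<delta>"
    unfolding vcell_def using a b c assms by (auto simp: min_def)
qed

lemma veq_cell_bounds:
  fixes a :: real
  defines "k \<equiv> \<lfloor>a / (1 + \<delta>)\<rfloor>"
  shows "of_int k * (1 + \<delta>) \<le> a" "a < of_int k * (1 + \<delta>) + (1 + \<delta>)"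
proof -
  have P: "1 + \<delta> > 0" using d by simp
  have "of_int k \<le> a / (1 + \<delta>)" "a / (1 + \<delta>) < of_int k + 1" unfolding k_def by (simp_all add: of_int_floor_le)
  then show "of_int k * (1 + \<delta>) \<le> a" "a < of_int k * (1 + \<delta>) + (1 + \<delta>)"
    using P by (simp_all add: le_divide_eq divide_less_eq algebra_simps)
qed

lemma veq_lip:
  assumes ab: "a \<le> b"
  shows "veq \<delta> b - veq \<delta> a \<le> b - a" "veq \<delta> a - veq \<delta> b \<le> (b - a) / \<delta>"
proof -
  define P where "P = 1 + \<delta>"
  have P: "P > 0" using d unfolding P_def by simp
  define ka where "ka = \<lfloor>a / P\<rfloor>"
  define kb where "kb = \<lfloor>b / P\<rfloor>"
  have ca: "of_int ka * P \<le> a" "a < of_int ka * P + P" using veq_cell_bounds[of a] unfolding ka_def P_def by auto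
  have cb: "of_int kb * P \<le> b" "b < of_int kb * P + P" using veq_cell_bounds[of b] unfolding kb_def P_def by auto
  have "ka \<le> kb" unfolding ka_def kb_def using ab P by (intro floor_mono divide_right_mono) auto
  then consider "ka = kb" | "ka < kb" by linarith
  then have "veq \<delta> b - veq \<delta> a \<le> b - a \<and> veq \<delta> a - veq \<delta> b \<le> (b - a) / \<delta>"
  proof cases
    case 1
    have "veq \<delta> a = vcell \<delta> (a - of_int ka * P)" using cellrep[of ka a] ca unfolding P_def by simp
    moreover have "veq \<delta> b = vcell \<delta> (b - of_int ka * P)" using cellrep[of ka b] cb 1 unfolding P_def by simp
    ultimately show ?thesis using vcell_mono[of "a - of_int ka * P" "b - of_int ka * P"] ca cb 1 ab
      unfolding P_def by auto
  next
    case 2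
    then have le: "of_int ka * P + P \<le> of_int kb * P"
      using P by (metis of_int_add of_int_1 distrib_right mult_1 mult_right_mono of_int_le_iff
          less_le zle_add1_eq_le less_imp_le order_less_imp_le zless_imp_add1_zle)
    have va: "veq \<delta> a = vcell \<delta> (a - of_int ka * P)" using cellrep[of ka a] ca unfolding P_def by simp
    have vb: "veq \<delta> b = vcell \<delta> (b - of_int kb * P)" using cellrep[of kb b] cb unfolding P_def by simp
    have v1: "veq \<delta> (of_int ka * P + P) = 0" using veq_lattice[of "ka + 1"] unfolding P_def by (simp add: algebra_simps)
    have v2: "veq \<delta> (of_int kb * P) = 0" using veq_lattice[of kb] unfolding P_def by simp
    have m1: "vcell \<delta> P - vcell \<delta> (a - of_int ka * P) \<le> P - (a - of_int ka * P)"
      "vcell \<delta> (a - of_int ka * P) - vcell \<delta> P \<le> (P - (a - of_int ka * P)) / \<delta>"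
      using vcell_mono[of "a - of_int ka * P" P] ca unfolding P_def by auto
    have m2: "vcell \<delta> (b - of_int kb * P) - vcell \<delta> 0 \<le> b - of_int kb * P"
      "vcell \<delta> 0 - vcell \<delta> (b - of_int kb * P) \<le> (b - of_int kb * P) / \<delta>"
      using vcell_mono[of 0 "b - of_int kb * P"] cb unfolding P_def by auto
    have z: "vcell \<delta> P = 0" "vcell \<delta> 0 = 0" using vcellP vcell0 unfolding P_def by auto
    have "veq \<delta> b - veq \<delta> a \<le> b - of_int kb * P + (P - (a - of_int ka * P))"
      using m1(1) m2(1) z va vb by simp
    also have "\<dots> \<le> b - a" using le by simp
    finally have r1: "veq \<delta> b - veq \<delta> a \<le> b - a" .
    have "veq \<delta> a - veq \<delta> b \<le> (P - (a - of_int ka * P)) / \<delta> + (b - of_int kb * P) / \<delta>"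
      using m1(2) m2(2) z va vb by simp
    also have "\<dots> = ((P - (a - of_int ka * P)) + (b - of_int kb * P)) / \<delta>" by (simp add: add_divide_distrib)
    also have "\<dots> \<le> (b - a) / \<delta>" using le d by (intro divide_right_mono) auto
    finally show ?thesis using r1 by simp
  qed
  then show "veq \<delta> b - veq \<delta> a \<le> b - a" "veq \<delta> a - veq \<delta> b \<le> (b - a) / \<delta>" by auto
qed

lemma veq_abs: "\<bar>veq \<delta> x - veq \<delta> y\<bar> \<le> (1 + 1 / \<delta>) * \<bar>x - y\<bar>"
proof -
  have "\<bar>veq \<delta> b - veq \<delta> a\<bar> \<le> (1 + 1 / \<delta>) * (b - a)" if "a \<le> b" for a b
  proof -
    have "b - a \<le> (1 + 1/\<delta>) * (b - a)" "(b - a) / \<delta> \<le> (1 + 1/\<delta>) * (b - a)"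
      using that d by (simp_all add: algebra_simps)
    then show ?thesis using veq_lip[OF that] by (simp add: abs_le_iff)
  qed
  from this[of x y] this[of y x] show ?thesis by (cases "x \<le> y") (auto simp: abs_minus_commute)
qed

lemma veq_cont: "continuous_on UNIV (veq \<delta>)"
  unfolding continuous_on_iff
proof (intro ballI allI impI)
  fix x e :: real assume e: "e > 0"
  define M where "M = 1 + 1 / \<delta>"
  have M: "M > 0" using d unfolding M_def by (simp add: add_pos_pos)
  show "\<exists>r>0. \<forall>x'\<in>UNIV. dist x' x < r \<longrightarrow> dist (veq \<delta> x') (veq \<delta> x) < e"
  proof (intro exI[of _ "e / M"] conjI ballI impI)
    show "e / M > 0" using e M by simp
    fix x' assume "dist x' x < e / M"
    then have "M * \<bar>x' - x\<bar> < e" using M by (simp add: dist_real_def field_simps)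
    moreover have "\<bar>veq \<delta> x' - veq \<delta> x\<bar> \<le> M * \<bar>x' - x\<bar>" using veq_abs unfolding M_def .
    ultimately show "dist (veq \<delta> x') (veq \<delta> x) < e" by (simp add: dist_real_def)
  qed
qed

lemma veq_per: "veq \<delta> (x + (1 + \<delta>)) = veq \<delta> x"
proof -
  have P: "1 + \<delta> > 0" using d by simp
  have "\<lfloor>(x + (1 + \<delta>)) / (1 + \<delta>)\<rfloor> = \<lfloor>x / (1 + \<delta>)\<rfloor> + 1"
    using P by (simp add: add_divide_distrib)
  then show ?thesis unfolding veq_def by (simp add: algebra_simps)
qed

end


definition Ieq :: "real \<Rightarrow> nat \<Rightarrow> real set" where
  "Ieq \<delta> k = {of_int (int_decode k) * (1 + \<delta>) + 1 .. of_int (int_decode k) * (1 + \<delta>) + (1 + \<delta>)}"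
definition Seq :: "real \<Rightarrow> real set" where
  "Seq \<delta> = range (\<lambda>k::int. of_int k * (1 + \<delta>)) \<union> range (\<lambda>k::int. of_int k * (1 + \<delta>) + 1)"

context fixes \<delta> :: real assumes d: "\<delta> > 0" begin

lemma Seq_fin: "finite (Seq \<delta> \<inter> {a..b})"
proof -
  define P where "P = 1 + \<delta>"
  have P: "P > 0" using d unfolding P_def by simp
  define K where "K = {\<lfloor>a / P\<rfloor> - 1 .. \<lceil>b / P\<rceil> + 1}"
  have "Seq \<delta> \<inter> {a..b} \<subseteq> (\<lambda>k. of_int k * P) ` K \<union> (\<lambda>k. of_int k * P + 1) ` K"
  proof
    fix x assume x: "x \<in> Seq \<delta> \<inter> {a..b}"
    then consider k where "x = of_int k * P" | k where "x = of_int k * P + 1"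
      unfolding Seq_def P_def by auto
    then show "x \<in> (\<lambda>k. of_int k * P) ` K \<union> (\<lambda>k. of_int k * P + 1) ` K"
    proof cases
      case 1
      then have ak: "a / P \<le> of_int k" "of_int k \<le> b / P" using x P by (auto simp: divide_le_eq le_divide_eq)
      have "\<lfloor>a / P\<rfloor> \<le> k" using floor_mono[OF ak(1)] by simp
      moreover have "k \<le> \<lceil>b / P\<rceil>" using ceiling_mono[OF ak(2)] by simp
      ultimately have "k \<in> K" unfolding K_def by simp
      then show ?thesis using 1 by auto
    next
      case 2
      have "a \<le> of_int k * P + 1" "of_int k * P \<le> b" using x 2 by auto
      then have ak: "a / P - 1 \<le> of_int k" "of_int k \<le> b / P" using P d unfolding P_def
        by (auto simp: divide_le_eq le_divide_eq algebra_simps)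
      have "\<lfloor>a / P - 1\<rfloor> \<le> k" using floor_mono[OF ak(1)] by simp
      then have "\<lfloor>a / P\<rfloor> - 1 \<le> k" by simp
      moreover have "k \<le> \<lceil>b / P\<rceil>" using ceiling_mono[OF ak(2)] by simp
      ultimately have "k \<in> K" unfolding K_def by simp
      then show ?thesis using 2 by auto
    qed
  qed
  moreover have "finite K" unfolding K_def by simp
  ultimately show ?thesis by (meson finite_Un finite_imageI finite_subset)
qed

lemma veq_pa: "piecewise_affine (veq \<delta>)"
  unfolding piecewise_affine_def
proof (intro exI[of _ "Seq \<delta>"] conjI allI impI)
  show "finite (Seq \<delta> \<inter> {a..b})" for a b by (rule Seq_fin)
  fix x y assume xy: "x \<le> y" and dis: "{x..y} \<inter> Seq \<delta> = {}"
  define P where "P = 1 + \<delta>"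
  have P: "P > 0" using d unfolding P_def by simp
  define k where "k = \<lfloor>x / P\<rfloor>"
  have cx: "of_int k * P \<le> x" "x < of_int k * P + P" using veq_cell_bounds[OF d, of x] unfolding k_def P_def by auto
  have S1: "of_int (k + 1) * P \<in> Seq \<delta>" "of_int k * P + 1 \<in> Seq \<delta>" unfolding Seq_def P_def
    by (rule UnI1, rule rangeI) (rule UnI2, rule rangeI)
  have yk: "y < of_int k * P + P"
  proof (rule ccontr)
    assume "\<not> y < of_int k * P + P"
    then have "of_int (k + 1) * P \<in> {x..y}" using cx by (auto simp: algebra_simps)
    then show False using dis S1 by blast
  qed
  have rep: "veq \<delta> t = vcell \<delta> (t - of_int k * P)" if "t \<in> {x..y}" for t
    using cellrep[OF d, of k t] that cx yk unfolding P_def by auto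
  have "of_int k * P + 1 \<notin> {x..y}" using dis S1 by blast
  then consider "y < of_int k * P + 1" | "x > of_int k * P + 1" by force
  then show "\<exists>m c. \<forall>t\<in>{x..y}. veq \<delta> t = m * t + c"
  proof cases
    case 1
    have "veq \<delta> t = 1 * t + (- of_int k * P)" if "t \<in> {x..y}" for t
      using rep[OF that] vcell_low[OF d, of "t - of_int k * P"] that 1 cx by auto
    then show ?thesis by blast
  next
    case 2
    have "veq \<delta> t = (- 1 / \<delta>) * t + (P + of_int k * P) / \<delta>" if "t \<in> {x..y}" for t
    proof -
      have "veq \<delta> t = (1 + \<delta> - (t - of_int k * P)) / \<delta>"
        using rep[OF that] vcell_high[OF d, of "t - of_int k * P"] that 2 yk unfolding P_def by auto
      moreover have "(1 + \<delta> - (t - of_int k * P)) / \<delta> = (- 1 / \<delta>) * t + (P + of_int k * P) / \<delta>"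
        unfolding P_def using d by (simp add: field_simps)
      ultimately show ?thesis by simp
    qed
    then show ?thesis by blast
  qed
qed

lemma Ieq_props:
  shows "is_interval (Ieq \<delta> k)" "emeasure lborel (Ieq \<delta> k) = ennreal \<delta>"
  unfolding Ieq_def using d by (auto simp: is_interval_cc)

lemma Ieq_disj:
  assumes "i \<noteq> j" shows "Ieq \<delta> i \<inter> Ieq \<delta> j = {}"
proof -
  define P where "P = 1 + \<delta>"
  have P: "P > 1" using d unfolding P_def by simp
  have ne: "int_decode i \<noteq> int_decode j" using assms inj_int_decode[of UNIV] by (auto dest: injD)
  have key: "of_int z1 * P + P < of_int z2 * P + 1" if "z1 < z2" for z1 z2 :: int
  proof -
    have "z1 + 1 \<le> z2" using that by simp
    then have "of_int (z1 + 1) * P \<le> of_int z2 * P" using P by (intro mult_right_mono) (auto simp del: of_int_add)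
    then show ?thesis by (simp add: algebra_simps)
  qed
  show ?thesis
  proof (cases "int_decode i < int_decode j")
    case True
    show ?thesis using key[OF True] unfolding Ieq_def P_def by auto
  next
    case False
    then have "int_decode j < int_decode i" using ne by simp
    from key[OF this] show ?thesis unfolding Ieq_def P_def by auto
  qed
qed

lemma veq_deriv:
  assumes x: "x \<notin> Seq \<delta>"
  shows "(veq \<delta> has_real_derivative (if x \<in> (\<Union>k. Ieq \<delta> k) then - (1 / \<delta>) else 1)) (at x)"
proof -
  define P where "P = 1 + \<delta>"
  have P: "P > 1" using d unfolding P_def by simp
  define k where "k = \<lfloor>x / P\<rfloor>"
  have cx: "of_int k * P \<le> x" "x < of_int k * P + P" using veq_cell_bounds[OF d, of x] unfolding k_def P_def by auto
  have n1: "x \<noteq> of_int k * P" "x \<noteq> of_int k * P + 1" using x unfolding Seq_def P_def by auto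
  consider "x < of_int k * P + 1" | "x > of_int k * P + 1" using n1 by linarith
  then show ?thesis
  proof cases
    case 1
    have notin: "x \<notin> (\<Union>k. Ieq \<delta> k)"
    proof
      assume "x \<in> (\<Union>k. Ieq \<delta> k)"
      then obtain j where j: "x \<in> Ieq \<delta> j" by auto
      define z where "z = int_decode j"
      have zj: "of_int z * P + 1 \<le> x" "x \<le> of_int z * P + P" using j unfolding Ieq_def z_def P_def by auto
      show False
      proof (cases "x = of_int z * P + P")
        case True
        then have "x = of_int (z + 1) * P" by (simp add: algebra_simps)
        moreover have "of_int (z + 1) * P \<in> Seq \<delta>" unfolding Seq_def P_def by (rule UnI1, rule rangeI)
        ultimately show False using x by simp
      next
        case False
        then have "\<lfloor>x / P\<rfloor> = z" using floor_cell[OF d, of z x] zj P unfolding P_def by auto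
        then have "z = k" unfolding k_def by simp
        then show False using zj 1 by simp
      qed
    qed
    have "((\<lambda>y. y - of_int k * P) has_real_derivative 1) (at x)" by (auto intro!: derivative_eq_intros)
    then have "(veq \<delta> has_real_derivative 1) (at x)"
    proof (rule has_field_derivative_transform_within_open[where S="{of_int k * P<..<of_int k * P + 1}"])
      show "open {of_int k * P<..<of_int k * P + 1}" by simp
      show "x \<in> {of_int k * P<..<of_int k * P + 1}" using cx n1 1 by auto
      fix y assume y: "y \<in> {of_int k * P<..<of_int k * P + 1}"
      then have "veq \<delta> y = vcell \<delta> (y - of_int k * P)" using cellrep[OF d, of k y] P unfolding P_def by auto
      also have "\<dots> = y - of_int k * P" using y by (intro vcell_low[OF d]) auto
      finally show "y - of_int k * P = veq \<delta> y" by simp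
    qed
    then show ?thesis using notin by simp
  next
    case 2
    have isin: "x \<in> (\<Union>k. Ieq \<delta> k)"
    proof -
      have "x \<in> Ieq \<delta> (int_encode k)" unfolding Ieq_def using 2 cx unfolding P_def by auto
      then show ?thesis by blast
    qed
    have "((\<lambda>y. (P - (y - of_int k * P)) / \<delta>) has_real_derivative - (1 / \<delta>)) (at x)"
      using d by (auto intro!: derivative_eq_intros)
    then have "(veq \<delta> has_real_derivative - (1 / \<delta>)) (at x)"
    proof (rule has_field_derivative_transform_within_open[where S="{of_int k * P + 1<..<of_int k * P + P}"])
      show "open {of_int k * P + 1<..<of_int k * P + P}" by simp
      show "x \<in> {of_int k * P + 1<..<of_int k * P + P}" using cx 2 by auto
      fix y assume y: "y \<in> {of_int k * P + 1<..<of_int k * P + P}"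
      then have "veq \<delta> y = vcell \<delta> (y - of_int k * P)" using cellrep[OF d, of k y] P unfolding P_def by auto
      also have "\<dots> = (1 + \<delta> - (y - of_int k * P)) / \<delta>" using y unfolding P_def by (intro vcell_high[OF d]) auto
      finally show "(P - (y - of_int k * P)) / \<delta> = veq \<delta> y" unfolding P_def by simp
    qed
    then show ?thesis using isin by simp
  qed
qed

lemma veq_adm:
  shows "veq \<delta> \<in> admissible (real L * (1 / \<delta> + 1) * \<delta>) (1 / \<delta>) \<delta>"
proof -
  have TT: "real L * (1 / \<delta> + 1) * \<delta> = real L * (1 + \<delta>)" using d by (simp add: field_simps)
  have per: "veq \<delta> (x + real L * (1 / \<delta> + 1) * \<delta>) = veq \<delta> x" for x
    unfolding TT using periodic_nat[where f="veq \<delta>" and T="1 + \<delta>", OF veq_per[OF d]]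
    by (simp add: mult.commute)
  have cS: "countable (Seq \<delta>)" unfolding Seq_def by simp
  have ae: "AE x in lborel. (veq \<delta> has_real_derivative (if x \<in> (\<Union>k. Ieq \<delta> k) then - (1 / \<delta>) else 1)) (at x)"
  proof (rule AE_I')
    show "Seq \<delta> \<in> null_sets lborel" by (rule countable_imp_null_set_lborel[OF cS])
    show "{x \<in> space lborel. \<not> (veq \<delta> has_real_derivative (if x \<in> (\<Union>k. Ieq \<delta> k) then - (1 / \<delta>) else 1)) (at x)} \<subseteq> Seq \<delta>"
      using veq_deriv by blast
  qed
  show ?thesis unfolding admissible_def
  proof (intro CollectI conjI allI impI exI[of _ "Ieq \<delta>"])
    show "continuous_on UNIV (veq \<delta>)" by (rule veq_cont[OF d])
    show "veq \<delta> (x + real L * (1 / \<delta> + 1) * \<delta>) = veq \<delta> x" for x by (rule per)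
    show "piecewise_affine (veq \<delta>)" by (rule veq_pa)
    show "is_interval (Ieq \<delta> k)" "emeasure lborel (Ieq \<delta> k) = ennreal \<delta>" for k by (rule Ieq_props)+
    fix i j :: nat assume "i \<noteq> j"
    then have "Ieq \<delta> i \<inter> Ieq \<delta> j = {}" by (rule Ieq_disj)
    then show "finite (Ieq \<delta> i \<inter> Ieq \<delta> j)" "card (Ieq \<delta> i \<inter> Ieq \<delta> j) \<le> 1" by auto
  next
    show "AE x in lborel. (veq \<delta> has_real_derivative (if x \<in> (\<Union>k. Ieq \<delta> k) then - (1 / \<delta>) else 1)) (at x)"
      by (rule ae)
  qed
qed

end


lemma adm_of:
  assumes "u \<in> admissible T \<Lambda> \<delta>" "\<delta> > 0" "\<Lambda> = 1 / \<delta>" "T > 0"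
  obtains I where "adm u T \<Lambda> \<delta> I"
proof -
  from assms(1) have "continuous_on UNIV u \<and> (\<forall>x. u (x + T) = u x) \<and> piecewise_affine u \<and>
     (\<exists>I :: nat \<Rightarrow> real set.
        (\<forall>k. is_interval (I k) \<and> emeasure lborel (I k) = ennreal \<delta>) \<and>
        (\<forall>i j. i \<noteq> j \<longrightarrow> finite (I i \<inter> I j) \<and> card (I i \<inter> I j) \<le> 1) \<and>
        (AE x in lborel. (u has_real_derivative (if x \<in> (\<Union>k. I k) then - \<Lambda> else 1)) (at x)))"
    unfolding admissible_def by (rule CollectD)
  then have c0: "continuous_on UNIV u" "\<forall>x. u (x + T) = u x" "piecewise_affine u"
    and ex: "\<exists>I :: nat \<Rightarrow> real set.
        (\<forall>k. is_interval (I k) \<and> emeasure lborel (I k) = ennreal \<delta>) \<and>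
        (\<forall>i j. i \<noteq> j \<longrightarrow> finite (I i \<inter> I j) \<and> card (I i \<inter> I j) \<le> 1) \<and>
        (AE x in lborel. (u has_real_derivative (if x \<in> (\<Union>k. I k) then - \<Lambda> else 1)) (at x))"
    by auto
  from ex obtain I :: "nat \<Rightarrow> real set" where X: "(\<forall>k. is_interval (I k) \<and> emeasure lborel (I k) = ennreal \<delta>) \<and>
        (\<forall>i j. i \<noteq> j \<longrightarrow> finite (I i \<inter> I j) \<and> card (I i \<inter> I j) \<le> 1) \<and>
        (AE x in lborel. (u has_real_derivative (if x \<in> (\<Union>k. I k) then - \<Lambda> else 1)) (at x))"
    by (rule exE)
  note c = c0 conjunct1[OF X] conjunct1[OF conjunct2[OF X]] conjunct2[OF conjunct2[OF X]]
  have "adm u T \<Lambda> \<delta> I" using c assms(2-4) by unfold_locales auto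
  then show ?thesis by (rule that)
qed

lemma upper_h:
  assumes a: "adm (veq \<delta>) T (1 / \<delta>) \<delta> I"
  shows "(\<integral>\<^sup>+ x. ennreal ((veq \<delta> (x + h) - veq \<delta> x)\<^sup>2) * indicator {0..T} x \<partial>lborel)
    \<le> ennreal (T * (1 + \<delta>)\<^sup>2 * (frac (h / (1 + \<delta>)) * (1 - frac (h / (1 + \<delta>)))))"
proof -
  interpret adm "veq \<delta>" T "1 / \<delta>" \<delta> I by (rule a)
  define P where "P = 1 + \<delta>"
  have P: "P \<ge> 1" using d unfolding P_def by simp
  define z where "z x = (veq \<delta> (x + h) - veq \<delta> x) / P" for x
  define \<theta> where "\<theta> = frac (h / P)"
  have th: "0 \<le> \<theta>" "\<theta> < 1" unfolding \<theta>_def by (auto simp: frac_lt_1)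
  have zc: "continuous_on {0..T} z" unfolding z_def
    by (intro continuous_intros cont_shift continuous_on_subset[OF cont]) (use P in auto)
  have iz: "(\<lambda>x. veq \<delta> (x + h) - veq \<delta> x) integrable_on {0..T}"
    by (intro integrable_continuous_real continuous_intros cont_shift continuous_on_subset[OF cont]) auto
  have zmean: "integral {0..T} z = 0"
    unfolding z_def using mean_zero[of h] by (simp add: integral_divide)
  have hdec: "h = \<theta> * P + of_int \<lfloor>h / P\<rfloor> * P"
    unfolding \<theta>_def frac_def using P by (simp add: algebra_simps)
  have bnd: "\<theta> - 1 \<le> z x \<and> z x \<le> \<theta>" for x
  proof -
    have "veq \<delta> (x + h) = veq \<delta> (x + \<theta> * P + of_int \<lfloor>h / P\<rfloor> * P)" by (subst hdec) (simp add: add.assoc)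
    also have "\<dots> = veq \<delta> (x + \<theta> * P)"
      using periodic_int[where f="veq \<delta>" and T=P, OF veq_per[OF d, unfolded P_def[symmetric]]] by simp
    finally have e: "veq \<delta> (x + h) = veq \<delta> (x + \<theta> * P)" .
    have t0: "0 \<le> \<theta> * P" "\<theta> * P \<le> P" using th P by (auto intro: mult_left_le_one_le)
    have u1: "veq \<delta> (x + \<theta> * P) - veq \<delta> x \<le> \<theta> * P" using veq_lip(1)[OF d, of x "x + \<theta> * P"] t0 by simp
    have u2: "veq \<delta> (x + P) - veq \<delta> (x + \<theta> * P) \<le> P - \<theta> * P" using veq_lip(1)[OF d, of "x + \<theta> * P" "x + P"] t0 by simp
    have "veq \<delta> (x + P) = veq \<delta> x" using veq_per[OF d] unfolding P_def .
    then have "\<theta> * P - P \<le> veq \<delta> (x + h) - veq \<delta> x" "veq \<delta> (x + h) - veq \<delta> x \<le> \<theta> * P"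
      using u1 u2 e by auto
    then show ?thesis unfolding z_def using P
      by (auto simp: divide_le_eq le_divide_eq algebra_simps)
  qed
  have up: "integral {0..T} (\<lambda>x. (z x)\<^sup>2) \<le> T * (\<theta> * (1 - \<theta>))"
    by (rule avg_upper[OF zc _ zmean]) (use T bnd in auto)
  have iG: "(\<lambda>x. (veq \<delta> (x + h) - veq \<delta> x)\<^sup>2) integrable_on {0..T}"
    by (intro integrable_continuous_real continuous_intros cont_shift continuous_on_subset[OF cont]) auto
  define G where "G = integral {0..T} (\<lambda>x. (veq \<delta> (x + h) - veq \<delta> x)\<^sup>2)"
  have "(\<lambda>x. (veq \<delta> (x + h) - veq \<delta> x)\<^sup>2) = (\<lambda>x. P\<^sup>2 * (z x)\<^sup>2)"
    using P by (auto simp: z_def power_divide)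
  then have GP: "G = P\<^sup>2 * integral {0..T} (\<lambda>x. (z x)\<^sup>2)" unfolding G_def by simp
  have "P\<^sup>2 * integral {0..T} (\<lambda>x. (z x)\<^sup>2) \<le> P\<^sup>2 * (T * (\<theta> * (1 - \<theta>)))"
    by (rule mult_left_mono[OF up]) simp
  then have "G \<le> T * P\<^sup>2 * (\<theta> * (1 - \<theta>))" unfolding GP by (simp add: algebra_simps)
  moreover have "(\<integral>\<^sup>+ x. ennreal ((veq \<delta> (x + h) - veq \<delta> x)\<^sup>2) * indicator {0..T} x \<partial>lborel) = ennreal G"
    unfolding G_def by (rule nn_integral_has_integral_lebesgue') (auto intro: integrable_integral[OF iG])
  ultimately show ?thesis unfolding P_def \<theta>_def by (simp add: ennreal_leI)
qed


definition gfun :: "real \<Rightarrow> real" where "gfun h = frac h * (1 - frac h)"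
definition Jint :: "real \<Rightarrow> ennreal" where
  "Jint p = (\<integral>\<^sup>+ h. ennreal (1 / \<bar>h\<bar> powr p) * ennreal (gfun h) \<partial>lborel)"
definition Cint :: "real \<Rightarrow> ennreal" where
  "Cint p = (\<integral>\<^sup>+ h. ennreal (1 / \<bar>h\<bar> powr p) * ennreal (min \<bar>h\<bar> 1) \<partial>lborel)"

lemma gfun_meas[measurable]: "gfun \<in> borel_measurable borel"
  unfolding gfun_def frac_def by measurable

lemma Fs_transform:
  assumes um[measurable]: "u \<in> borel_measurable borel" and T: "T > 0"
  shows "ennreal (2 * T) * Fs s T u = (\<integral>\<^sup>+ h. ennreal (1 / \<bar>h\<bar> powr (1 + 2 * s)) *
      (\<integral>\<^sup>+ x. ennreal ((u (x + h) - u x)\<^sup>2) * indicator {0..T} x \<partial>lborel) \<partial>lborel)"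
proof -
  have "ennreal (2 * T) * ennreal (1 / (2 * T)) = 1"
    using T by (simp add: ennreal_mult'[symmetric])
  then have "ennreal (2 * T) * Fs s T u = (\<integral>\<^sup>+ x. (\<integral>\<^sup>+ y. ennreal (\<bar>u x - u y\<bar>\<^sup>2 / \<bar>x - y\<bar> powr (1 + 2 * s)) \<partial>lborel)
        * indicator {0..T} x \<partial>lborel)"
    unfolding Fs_def by (simp add: mult.assoc[symmetric])
  also have "\<dots> = (\<integral>\<^sup>+ h. ennreal (1 / \<bar>h\<bar> powr (1 + 2 * s)) *
      (\<integral>\<^sup>+ x. ennreal ((u (x + h) - u x)\<^sup>2) * indicator {0..T} x \<partial>lborel) \<partial>lborel)"
    by (rule transform) (rule um)
  finally show ?thesis .
qed

lemma (in adm) Fs_lower: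
  assumes s: "0 < s" "s < 1/2"
  shows "ennreal (2 * T) * Fs s T u + ennreal (T * (1 + \<delta>)\<^sup>2 * \<delta> powr (1 - 2 * s)) * Cint (1 + 2 * s)
    \<ge> ennreal (T * (1 + \<delta>)\<^sup>2 * (1 + \<delta>) powr (- 2 * s)) * Jint (1 + 2 * s)"
proof -
  define p where "p = 1 + 2 * s"
  define P where "P = 1 + \<delta>"
  have P: "P > 0" using d unfolding P_def by simp
  have um[measurable]: "u \<in> borel_measurable borel"
    using cont by (simp add: borel_measurable_continuous_onI)
  define Gu where "Gu h = (\<integral>\<^sup>+ x. ennreal ((u (x + h) - u x)\<^sup>2) * indicator {0..T} x \<partial>lborel)" for h
  have Gum[measurable]: "Gu \<in> borel_measurable borel" unfolding Gu_def by measurable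
  have FG: "ennreal (2 * T) * Fs s T u = (\<integral>\<^sup>+ h. ennreal (1 / \<bar>h\<bar> powr p) * Gu h \<partial>lborel)"
    unfolding Gu_def p_def by (rule Fs_transform[OF um T])
  have E: "(\<integral>\<^sup>+ h. ennreal (1 / \<bar>h\<bar> powr p) * ennreal (T * P\<^sup>2 * min \<bar>h\<bar> \<delta>) \<partial>lborel)
      = ennreal (T * P\<^sup>2 * \<delta> powr (1 - 2 * s)) * Cint p"
  proof -
    have pt: "ennreal (T * P\<^sup>2 * min \<bar>h\<bar> \<delta>) = ennreal (T * P\<^sup>2 * \<delta>) * ennreal (min \<bar>h / \<delta>\<bar> 1)" for h
    proof -
      have "min \<bar>h\<bar> \<delta> = \<delta> * min \<bar>h / \<delta>\<bar> 1" using d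
        by (auto simp: min_def abs_divide divide_le_eq)
      then show ?thesis using d T by (simp add: ennreal_mult'[symmetric] mult.assoc)
    qed
    have "(\<integral>\<^sup>+ h. ennreal (1 / \<bar>h\<bar> powr p) * ennreal (T * P\<^sup>2 * min \<bar>h\<bar> \<delta>) \<partial>lborel)
       = (\<integral>\<^sup>+ h. ennreal (T * P\<^sup>2 * \<delta>) * (ennreal (1 / \<bar>h\<bar> powr p) * ennreal (min \<bar>h / \<delta>\<bar> 1)) \<partial>lborel)"
      by (simp only: pt mult.left_commute)
    also have "\<dots> = ennreal (T * P\<^sup>2 * \<delta>) * (\<integral>\<^sup>+ h. ennreal (1 / \<bar>h\<bar> powr p) * ennreal (min \<bar>h / \<delta>\<bar> 1) \<partial>lborel)"
      by (rule nn_integral_cmult) measurable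
    also have "(\<integral>\<^sup>+ h. ennreal (1 / \<bar>h\<bar> powr p) * ennreal (min \<bar>h / \<delta>\<bar> 1) \<partial>lborel)
       = ennreal (\<delta> powr (1 - p)) * Cint p"
      unfolding Cint_def using K_scale[of "\<lambda>k. ennreal (min \<bar>k\<bar> 1)" \<delta> p] d by simp
    also have "ennreal (T * P\<^sup>2 * \<delta>) * (ennreal (\<delta> powr (1 - p)) * Cint p)
       = ennreal (T * P\<^sup>2 * \<delta> powr (1 - 2 * s)) * Cint p"
    proof -
      have "\<delta> * \<delta> powr (1 - p) = \<delta> powr (1 - 2 * s)"
        using d unfolding p_def by (simp add: powr_add[symmetric] powr_mult_base)
      then have e: "(T * P\<^sup>2 * \<delta>) * \<delta> powr (1 - p) = T * P\<^sup>2 * \<delta> powr (1 - 2 * s)"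
        by (metis mult.assoc)
      have "ennreal (T * P\<^sup>2 * \<delta>) * (ennreal (\<delta> powr (1 - p)) * Cint p)
          = ennreal ((T * P\<^sup>2 * \<delta>) * \<delta> powr (1 - p)) * Cint p"
        using d T by (simp add: ennreal_mult' mult.assoc)
      then show ?thesis unfolding e .
    qed
    finally show ?thesis .
  qed
  have R: "(\<integral>\<^sup>+ h. ennreal (1 / \<bar>h\<bar> powr p) * ennreal (T * P\<^sup>2 * gfun (h / P)) \<partial>lborel)
      = ennreal (T * P\<^sup>2 * P powr (- 2 * s)) * Jint p"
  proof -
    have pt: "ennreal (T * P\<^sup>2 * gfun (h / P)) = ennreal (T * P\<^sup>2) * ennreal (gfun (h / P))" for h
      using T by (simp add: ennreal_mult')
    have "(\<integral>\<^sup>+ h. ennreal (1 / \<bar>h\<bar> powr p) * ennreal (T * P\<^sup>2 * gfun (h / P)) \<partial>lborel)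
       = (\<integral>\<^sup>+ h. ennreal (T * P\<^sup>2) * (ennreal (1 / \<bar>h\<bar> powr p) * ennreal (gfun (h / P))) \<partial>lborel)"
      by (simp only: pt mult.left_commute)
    also have "\<dots> = ennreal (T * P\<^sup>2) * (\<integral>\<^sup>+ h. ennreal (1 / \<bar>h\<bar> powr p) * ennreal (gfun (h / P)) \<partial>lborel)"
      by (rule nn_integral_cmult) measurable
    also have "(\<integral>\<^sup>+ h. ennreal (1 / \<bar>h\<bar> powr p) * ennreal (gfun (h / P)) \<partial>lborel)
       = ennreal (P powr (1 - p)) * Jint p"
      unfolding Jint_def using K_scale[of "\<lambda>k. ennreal (gfun k)" P p] P by simp
    also have "ennreal (T * P\<^sup>2) * (ennreal (P powr (1 - p)) * Jint p) = ennreal (T * P\<^sup>2 * P powr (- 2 * s)) * Jint p"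
    proof -
      have "1 - p = - 2 * s" unfolding p_def by simp
      then show ?thesis using P T by (simp add: ennreal_mult'[symmetric] mult.assoc[symmetric])
    qed
    finally show ?thesis .
  qed
  have "(\<integral>\<^sup>+ h. ennreal (1 / \<bar>h\<bar> powr p) * ennreal (T * P\<^sup>2 * gfun (h / P)) \<partial>lborel)
     \<le> (\<integral>\<^sup>+ h. ennreal (1 / \<bar>h\<bar> powr p) * Gu h + ennreal (1 / \<bar>h\<bar> powr p) * ennreal (T * P\<^sup>2 * min \<bar>h\<bar> \<delta>) \<partial>lborel)"
  proof (rule nn_integral_mono)
    fix h
    have "ennreal (T * P\<^sup>2 * gfun (h / P)) \<le> Gu h + ennreal (T * P\<^sup>2 * min \<bar>h\<bar> \<delta>)"
      using lower_h[of h] unfolding Gu_def gfun_def P_def .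
    then show "ennreal (1 / \<bar>h\<bar> powr p) * ennreal (T * P\<^sup>2 * gfun (h / P))
        \<le> ennreal (1 / \<bar>h\<bar> powr p) * Gu h + ennreal (1 / \<bar>h\<bar> powr p) * ennreal (T * P\<^sup>2 * min \<bar>h\<bar> \<delta>)"
      by (simp add: distrib_left[symmetric] mult_left_mono)
  qed
  also have "\<dots> = (\<integral>\<^sup>+ h. ennreal (1 / \<bar>h\<bar> powr p) * Gu h \<partial>lborel)
      + (\<integral>\<^sup>+ h. ennreal (1 / \<bar>h\<bar> powr p) * ennreal (T * P\<^sup>2 * min \<bar>h\<bar> \<delta>) \<partial>lborel)"
    by (rule nn_integral_add) measurable
  finally have "ennreal (T * P\<^sup>2 * P powr (- 2 * s)) * Jint p \<le>
      ennreal (2 * T) * Fs s T u + ennreal (T * P\<^sup>2 * \<delta> powr (1 - 2 * s)) * Cint p"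
    unfolding FG[symmetric] E R .
  then show ?thesis unfolding P_def p_def .
qed

lemma Fs_upper:
  assumes d: "\<delta> > 0" and L: "L \<ge> 1"
  defines "T \<equiv> real L * (1 / \<delta> + 1) * \<delta>"
  shows "ennreal (2 * T) * Fs s T (veq \<delta>) \<le> ennreal (T * (1 + \<delta>)\<^sup>2 * (1 + \<delta>) powr (- 2 * s)) * Jint (1 + 2 * s)"
proof -
  have T: "T > 0" unfolding T_def using d L by (simp add: add_pos_pos)
  obtain I where a: "adm (veq \<delta>) T (1 / \<delta>) \<delta> I"
    using adm_of[OF veq_adm[OF d, of L] d _ T[unfolded T_def]] unfolding T_def by blast
  interpret adm "veq \<delta>" T "1 / \<delta>" \<delta> I by (rule a)
  define p where "p = 1 + 2 * s"
  define P where "P = 1 + \<delta>"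
  have P: "P > 0" using d unfolding P_def by simp
  have um[measurable]: "veq \<delta> \<in> borel_measurable borel"
    using cont by (simp add: borel_measurable_continuous_onI)
  define Gu where "Gu h = (\<integral>\<^sup>+ x. ennreal ((veq \<delta> (x + h) - veq \<delta> x)\<^sup>2) * indicator {0..T} x \<partial>lborel)" for h
  have FG: "ennreal (2 * T) * Fs s T (veq \<delta>) = (\<integral>\<^sup>+ h. ennreal (1 / \<bar>h\<bar> powr p) * Gu h \<partial>lborel)"
    unfolding Gu_def p_def by (rule Fs_transform[OF um T])
  have R: "(\<integral>\<^sup>+ h. ennreal (1 / \<bar>h\<bar> powr p) * ennreal (T * P\<^sup>2 * gfun (h / P)) \<partial>lborel)
      = ennreal (T * P\<^sup>2 * P powr (- 2 * s)) * Jint p"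
  proof -
    have pt: "ennreal (T * P\<^sup>2 * gfun (h / P)) = ennreal (T * P\<^sup>2) * ennreal (gfun (h / P))" for h
      using T by (simp add: ennreal_mult')
    have "(\<integral>\<^sup>+ h. ennreal (1 / \<bar>h\<bar> powr p) * ennreal (T * P\<^sup>2 * gfun (h / P)) \<partial>lborel)
       = (\<integral>\<^sup>+ h. ennreal (T * P\<^sup>2) * (ennreal (1 / \<bar>h\<bar> powr p) * ennreal (gfun (h / P))) \<partial>lborel)"
      by (simp only: pt mult.left_commute)
    also have "\<dots> = ennreal (T * P\<^sup>2) * (\<integral>\<^sup>+ h. ennreal (1 / \<bar>h\<bar> powr p) * ennreal (gfun (h / P)) \<partial>lborel)"
      by (rule nn_integral_cmult) measurable
    also have "(\<integral>\<^sup>+ h. ennreal (1 / \<bar>h\<bar> powr p) * ennreal (gfun (h / P)) \<partial>lborel)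
       = ennreal (P powr (1 - p)) * Jint p"
      unfolding Jint_def using K_scale[of "\<lambda>k. ennreal (gfun k)" P p] P by simp
    also have "ennreal (T * P\<^sup>2) * (ennreal (P powr (1 - p)) * Jint p) = ennreal (T * P\<^sup>2 * P powr (- 2 * s)) * Jint p"
    proof -
      have "1 - p = - 2 * s" unfolding p_def by simp
      then show ?thesis using P T by (simp add: ennreal_mult'[symmetric] mult.assoc[symmetric])
    qed
    finally show ?thesis .
  qed
  have "ennreal (2 * T) * Fs s T (veq \<delta>) = (\<integral>\<^sup>+ h. ennreal (1 / \<bar>h\<bar> powr p) * Gu h \<partial>lborel)"
    by (rule FG)
  also have "\<dots> \<le> (\<integral>\<^sup>+ h. ennreal (1 / \<bar>h\<bar> powr p) * ennreal (T * P\<^sup>2 * gfun (h / P)) \<partial>lborel)"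
  proof (rule nn_integral_mono)
    fix h
    have "Gu h \<le> ennreal (T * P\<^sup>2 * gfun (h / P))"
      using upper_h[OF a, of h] unfolding Gu_def gfun_def P_def .
    then show "ennreal (1 / \<bar>h\<bar> powr p) * Gu h \<le> ennreal (1 / \<bar>h\<bar> powr p) * ennreal (T * P\<^sup>2 * gfun (h / P))"
      by (rule mult_left_mono) simp
  qed
  also note R
  finally show ?thesis unfolding P_def p_def .
qed


lemma Jint_le_Cint: "Jint p \<le> Cint p"
  unfolding Jint_def Cint_def
proof (rule nn_integral_mono)
  fix h
  have "gfun h \<le> min \<bar>h\<bar> 1" using g_le(1)[of h] unfolding gfun_def .
  then have "ennreal (gfun h) \<le> ennreal (min \<bar>h\<bar> 1)" by (rule ennreal_leI)
  then show "ennreal (1 / \<bar>h\<bar> powr p) * ennreal (gfun h) \<le> ennreal (1 / \<bar>h\<bar> powr p) * ennreal (min \<bar>h\<bar> 1)"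
    by (rule mult_left_mono) simp
qed

lemma rhs_eq:
  "(\<integral>\<^sup>+ x. (\<integral>\<^sup>+ y. ennreal (\<bar>frac x - frac y\<bar>\<^sup>2 / \<bar>x - y\<bar> powr p) \<partial>lborel) * indicator {0..1} x \<partial>lborel)
   = Jint p"
proof -
  have fm[measurable]: "(frac :: real \<Rightarrow> real) \<in> borel_measurable borel" unfolding frac_def by measurable
  have "(\<integral>\<^sup>+ x. (\<integral>\<^sup>+ y. ennreal (\<bar>frac x - frac y\<bar>\<^sup>2 / \<bar>x - y\<bar> powr p) \<partial>lborel) * indicator {0..1} x \<partial>lborel)
     = (\<integral>\<^sup>+ h. ennreal (1 / \<bar>h\<bar> powr p) * (\<integral>\<^sup>+ x. ennreal ((frac (x + h) - frac x)\<^sup>2) * indicator {0..1} x \<partial>lborel) \<partial>lborel)"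
    by (rule transform) (rule fm)
  also have "\<dots> = Jint p" unfolding Jint_def gfun_def by (simp only: frac_G)
  finally show ?thesis .
qed

lemma ennreal_ineq_real:
  fixes a b c k1 k2 :: real
  assumes "ennreal a * ennreal x + ennreal k1 * ennreal c \<ge> ennreal k2 * ennreal b"
    "a \<ge> 0" "x \<ge> 0" "k1 \<ge> 0" "c \<ge> 0" "k2 \<ge> 0" "b \<ge> 0"
  shows "a * x + k1 * c \<ge> k2 * b"
proof -
  have e1: "ennreal (a * x + k1 * c) = ennreal (a * x) + ennreal (k1 * c)"
    by (rule ennreal_plus) (use assms in auto)
  have e2: "ennreal (a * x) = ennreal a * ennreal x" "ennreal (k1 * c) = ennreal k1 * ennreal c"
    using assms by (simp_all add: ennreal_mult')
  have "ennreal a * ennreal x + ennreal k1 * ennreal c = ennreal (a * x + k1 * c)"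
    unfolding e1 e2 ..
  moreover have "ennreal k2 * ennreal b = ennreal (k2 * b)" using assms by (simp add: ennreal_mult')
  ultimately have le: "ennreal (k2 * b) \<le> ennreal (a * x + k1 * c)" using assms(1) by metis
  have pos: "0 \<le> a * x + k1 * c" using assms by auto
  show ?thesis using ennreal_le_iff[OF pos, of "k2 * b"] le by blast
qed


theorem proposition1p4:
  fixes s :: real
    and \<delta> \<Lambda> T :: "nat \<Rightarrow> real"
    and L :: "nat \<Rightarrow> nat"
    and u :: "nat \<Rightarrow> real \<Rightarrow> real"
  assumes s_pos: "0 < s" and s_lt: "s < 1 / 2"
    and \<delta>_pos: "\<And>n. 0 < \<delta> n"
    and \<delta>_lim: "\<delta> \<longlonglongrightarrow> 0"
    and \<Lambda>_def: "\<And>n. \<Lambda> n = 1 / \<delta> n"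
    and L_pos: "\<And>n. 1 \<le> L n"
    and T_def: "\<And>n. T n = real (L n) * (\<Lambda> n + 1) * \<delta> n"
    and u_adm: "\<And>n. u n \<in> admissible (T n) (\<Lambda> n) (\<delta> n)"
    and u_min: "\<And>n v. v \<in> admissible (T n) (\<Lambda> n) (\<delta> n) \<Longrightarrow> Fs s (T n) (u n) \<le> Fs s (T n) v"
  shows "(\<lambda>n. Fs s (T n) (u n)) \<longlonglongrightarrow>
    ennreal (1 / 2) * (\<integral>\<^sup>+ x. (\<integral>\<^sup>+ y. ennreal (\<bar>frac x - frac y\<bar>\<^sup>2 / \<bar>x - y\<bar> powr (1 + 2 * s)) \<partial>lborel)
        * indicator {0..1} x \<partial>lborel)"
proof -
  define p where "p = 1 + 2 * s"
  have Cfin: "Cint p < \<infinity>" unfolding Cint_def p_def using powr_integrals_finite[OF s_pos s_lt] .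
  have Jfin: "Jint p < \<infinity>" using Jint_le_Cint[of p] Cfin by (rule le_less_trans)
  define Cr where "Cr = enn2real (Cint p)"
  define Jr where "Jr = enn2real (Jint p)"
  have Cr: "Cint p = ennreal Cr" "Cr \<ge> 0" unfolding Cr_def using ennreal_enn2real[OF Cfin[unfolded infinity_ennreal_def]] by simp_all
  have Jr: "Jint p = ennreal Jr" "Jr \<ge> 0" unfolding Jr_def using ennreal_enn2real[OF Jfin[unfolded infinity_ennreal_def]] by simp_all
  define P where "P n = 1 + \<delta> n" for n
  define lo where "lo n = (P n)\<^sup>2 * P n powr (- 2 * s) * Jr / 2 - (P n)\<^sup>2 * \<delta> n powr (1 - 2 * s) * Cr / 2" for n
  define hi where "hi n = (P n)\<^sup>2 * P n powr (- 2 * s) * Jr / 2" for n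
  define a where "a n = enn2real (Fs s (T n) (u n))" for n
  have main: "Fs s (T n) (u n) = ennreal (a n) \<and> lo n \<le> a n \<and> a n \<le> hi n" for n
  proof -
    have d: "\<delta> n > 0" by (rule \<delta>_pos)
    have TT: "T n = real (L n) * (1 / \<delta> n + 1) * \<delta> n" using T_def \<Lambda>_def by simp
    have Tp: "T n > 0" unfolding TT using d L_pos[of n] by (simp add: add_pos_pos)
    obtain I where ai: "adm (u n) (T n) (\<Lambda> n) (\<delta> n) I"
      using adm_of[OF u_adm d \<Lambda>_def Tp] by blast
    have low: "ennreal (2 * T n) * Fs s (T n) (u n) + ennreal (T n * (1 + \<delta> n)\<^sup>2 * \<delta> n powr (1 - 2 * s)) * Cint p
      \<ge> ennreal (T n * (1 + \<delta> n)\<^sup>2 * (1 + \<delta> n) powr (- 2 * s)) * Jint p"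
      unfolding p_def using adm.Fs_lower[OF ai s_pos s_lt] .
    have vadm: "veq (\<delta> n) \<in> admissible (T n) (\<Lambda> n) (\<delta> n)"
      unfolding TT \<Lambda>_def using veq_adm[OF d, of "L n"] .
    have up: "ennreal (2 * T n) * Fs s (T n) (veq (\<delta> n)) \<le> ennreal (T n * (1 + \<delta> n)\<^sup>2 * (1 + \<delta> n) powr (- 2 * s)) * Jint p"
      unfolding TT p_def using Fs_upper[OF d L_pos[of n], of s] .
    have up2: "ennreal (2 * T n) * Fs s (T n) (u n) \<le> ennreal (T n * (1 + \<delta> n)\<^sup>2 * (1 + \<delta> n) powr (- 2 * s)) * Jint p"
      using mult_left_mono[OF u_min[OF vadm], of "ennreal (2 * T n)"] up by simp
    define K2 where "K2 = T n * (1 + \<delta> n)\<^sup>2 * (1 + \<delta> n) powr (- 2 * s)"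
    define K1 where "K1 = T n * (1 + \<delta> n)\<^sup>2 * \<delta> n powr (1 - 2 * s)"
    have k0: "K1 \<ge> 0" "K2 \<ge> 0" unfolding K1_def K2_def using Tp by auto
    have up3: "ennreal (2 * T n) * Fs s (T n) (u n) \<le> ennreal (K2 * Jr)"
      using up2 unfolding K2_def[symmetric] Jr(1) ennreal_mult'[OF k0(2), symmetric] .
    have fin: "Fs s (T n) (u n) < top"
    proof -
      have "ennreal (2 * T n) * Fs s (T n) (u n) < top" using up3 by (rule le_less_trans) simp
      moreover have "ennreal (2 * T n) \<noteq> 0" using Tp by simp
      ultimately show ?thesis unfolding ennreal_mult_less_top by auto
    qed
    have Fa: "Fs s (T n) (u n) = ennreal (a n)" "a n \<ge> 0" unfolding a_def using ennreal_enn2real[OF fin] by simp_all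
    have r1: "2 * T n * a n + K1 * Cr \<ge> K2 * Jr"
    proof (rule ennreal_ineq_real)
      show "ennreal (2 * T n) * ennreal (a n) + ennreal K1 * ennreal Cr \<ge> ennreal K2 * ennreal Jr"
        using low unfolding K1_def[symmetric] K2_def[symmetric] Fa(1) Cr(1) Jr(1) .
    qed (use Fa Cr Jr Tp k0 in auto)
    have r2: "2 * T n * a n \<le> K2 * Jr"
    proof -
      have "ennreal (2 * T n * a n) = ennreal (2 * T n) * ennreal (a n)" by (rule ennreal_mult') (use Tp in auto)
      then have "ennreal (2 * T n * a n) \<le> ennreal (K2 * Jr)" using up3 unfolding Fa(1) by simp
      moreover have "0 \<le> K2 * Jr" using k0 Jr by simp
      ultimately show ?thesis using ennreal_le_iff by blast
    qed
    have "lo n \<le> a n"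
    proof -
      have "T n * (2 * lo n) \<le> T n * (2 * a n)"
        using r1 unfolding lo_def P_def K1_def K2_def by (simp add: algebra_simps)
      then show ?thesis using Tp by simp
    qed
    moreover have "a n \<le> hi n"
    proof -
      have "T n * (2 * a n) \<le> T n * (2 * hi n)"
        using r2 unfolding hi_def P_def K2_def by (simp add: algebra_simps)
      then show ?thesis using Tp by simp
    qed
    ultimately show ?thesis using Fa by simp
  qed
  have Plim: "P \<longlonglongrightarrow> 1" unfolding P_def using tendsto_add[OF tendsto_const \<delta>_lim, of 1] by simp
  have hilim: "hi \<longlonglongrightarrow> Jr / 2"
  proof -
    have t1: "(\<lambda>n. (P n)\<^sup>2 * P n powr (- 2 * s)) \<longlonglongrightarrow> 1\<^sup>2 * 1 powr (- 2 * s)"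
      by (intro tendsto_mult tendsto_power tendsto_powr Plim tendsto_const) simp
    have "(\<lambda>n. (P n)\<^sup>2 * P n powr (- 2 * s) * (Jr / 2)) \<longlonglongrightarrow> 1\<^sup>2 * 1 powr (- 2 * s) * (Jr / 2)"
      by (rule tendsto_mult[OF t1 tendsto_const])
    then show ?thesis unfolding hi_def by simp
  qed
  have dlim: "(\<lambda>n. \<delta> n powr (1 - 2 * s)) \<longlonglongrightarrow> 0"
    by (rule tendsto_zero_powrI[OF \<delta>_lim tendsto_const]) (use \<delta>_pos s_lt in \<open>auto intro!: always_eventually less_imp_le\<close>)
  have lolim: "lo \<longlonglongrightarrow> Jr / 2"
  proof -
    have "(\<lambda>n. (P n)\<^sup>2 * \<delta> n powr (1 - 2 * s) * (Cr / 2)) \<longlonglongrightarrow> 1\<^sup>2 * 0 * (Cr / 2)"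
      by (intro tendsto_mult tendsto_power Plim dlim tendsto_const)
    then have "(\<lambda>n. hi n - (P n)\<^sup>2 * \<delta> n powr (1 - 2 * s) * (Cr / 2)) \<longlonglongrightarrow> Jr / 2 - 1\<^sup>2 * 0 * (Cr / 2)"
      by (intro tendsto_diff hilim)
    then show ?thesis unfolding lo_def hi_def by simp
  qed
  have alim: "a \<longlonglongrightarrow> Jr / 2"
    by (rule tendsto_sandwich[OF _ _ lolim hilim]) (use main in auto)
  have "(\<lambda>n. ennreal (a n)) \<longlonglongrightarrow> ennreal (Jr / 2)" by (rule tendsto_ennrealI[OF alim])
  moreover have "ennreal (Jr / 2) = ennreal (1 / 2) *
      (\<integral>\<^sup>+ x. (\<integral>\<^sup>+ y. ennreal (\<bar>frac x - frac y\<bar>\<^sup>2 / \<bar>x - y\<bar> powr (1 + 2 * s)) \<partial>lborel) * indicator {0..1} x \<partial>lborel)"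
  proof -
    have "ennreal (1 / 2) * ennreal Jr = ennreal (1 / 2 * Jr)" by (rule ennreal_mult'[symmetric]) simp
    then show ?thesis unfolding rhs_eq Jr(1)[unfolded p_def] by simp
  qed
  moreover have "(\<lambda>n. Fs s (T n) (u n)) = (\<lambda>n. ennreal (a n))" using main by auto
  ultimately show ?thesis by simp
qed


end
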